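(* Let $n\ge 3$ be an odd integer, $(\mathcal{C},\Sigma)$ an $n$-angulated category and $(\mathcal{A},\Sigma)$ a complete and dense $n$-angulated subcategory. Then for every object $C$ of $\mathcal{C}$: $C$ lies in $\mathcal{A}$ if and only if $[C]=0$ in $K_0(\mathcal{C})/\operatorname{Im}K_0(\mathcal{A})$.
   Context: All categories are small. Fix an integer $n\ge 3$. Let $\mathcal{C}$ be an additive category with an automorphism $\Sigma$. An $n$-$\Sigma$-sequence in $\mathcal{C}$ is a diagram $A_1\xrightarrow{\alpha_1}A_2\xrightarrow{\alpha_2}\cdots\xrightarrow{\alpha_{n-1}}A_n\xrightarrow{\alpha_n}\Sigma A_1$. Its left rotation is $A_2\xrightarrow{\alpha_2}\cdots\xrightarrow{\alpha_n}\Sigma A_1\xrightarrow{(-1)^n\Sigma\alpha_1}\Sigma A_2$. A morphism from $(A_\bullet,\alpha)$ to $(B_\bullet,\beta)$ is a tuple $(\varphi_1,\dots,\varphi_n)$, $\varphi_i:A_i\to B_i$, with $\beta_i\varphi_i=\varphi_{i+1}\alpha_i$ for $1\le i\le n-1$ and $\beta_n\varphi_n=(\Sigma\varphi_1)\alpha_n$; it is an isomorphism if all $\varphi_i$ are isomorphisms. Direct sums of sequences are taken termwise. $(\mathcal{C},\Sigma)$ is $n$-angulated if it is equipped with a collection $\mathscr N$ of $n$-$\Sigma$-sequences, called $n$-angles, such that: (N1)(a) $\mathscr N$ is closed under direct sums, direct summands and isomorphisms of $n$-$\Sigma$-sequences; (b) for every object $A$, the trivial sequence $A\xrightarrow{1}A\to0\to\cdots\to0\to\Sigma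 A$ is in $\mathscr N$; (c) every morphism $A_1\to A_2$ is the first morphism of some $n$-angle; (N2) an $n$-$\Sigma$-sequence is in $\mathscr N$ iff its left rotation is; (N3) given $n$-angles $(A_\bullet,\alpha),(B_\bullet,\beta)$ and $\varphi_1:A_1\to B_1$, $\varphi_2:A_2\to B_2$ with $\beta_1\varphi_1=\varphi_2\alpha_1$, there exist $\varphi_3,\dots,\varphi_n$ making $(\varphi_1,\dots,\varphi_n)$ a morphism; (N4) in (N3) the $\varphi_i$ can be chosen so that the mapping cone $A_2\oplus B_1\to A_3\oplus B_2\to\cdots\to\Sigma A_1\oplus B_n\to\Sigma A_2\oplus\Sigma B_1$, with maps $\left[\begin{smallmatrix}-\alpha_{i+1}&0\\ \varphi_{i+1}&\beta_i\end{smallmatrix}\right]$ ($1\le i\le n-1$) and last map $\left[\begin{smallmatrix}-\Sigma\alpha_1&0\\ \Sigma\varphi_1&\beta_n\end{smallmatrix}\right]$, is an $n$-angle. Grothendieck group: $F(\mathcal{C})$ is the free abelian group on isomorphism classes $\langle A\rangle$ of objects; for an $n$-angle $A_\bullet$, $\chi(A_\bullet)=\sum_{i=1}^n(-1)^{i+1}\langle A_i\rangle$; $R(\mathcal{C})$ is generated by all $\chi(A_\bullet)$, together with $\langle 0\rangle$ when $n$ is even; $K_0(\mathcal{C})=F(\mathcal{C})/R(\mathcal{C})$, $[A]$ the class of $\langle A\rangle$. An additive functor $L:\mathcal{C}\to\mathcal{C}'$ between $n$-angulated categories is $n$-angulated if there is a natural isomorphism $\eta:L\circ\Sigma\to\Sigma'\circ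 L$ such that $L$ sends each $n$-angle $(A_\bullet,\alpha)$ to the $n$-angle $L A_1\xrightarrow{L\alpha_1}\cdots\xrightarrow{L\alpha_{n-1}}LA_n\xrightarrow{\eta\circ L\alpha_n}\Sigma'LA_1$. An $n$-angulated subcategory of $(\mathcal{C},\Sigma)$ is a full subcategory $\mathcal{A}$, closed under isomorphisms, on which $\Sigma$ restricts to an automorphism, equipped with $n$-angles making $(\mathcal{A},\Sigma)$ $n$-angulated, such that the inclusion $\mathcal{A}\to\mathcal{C}$ is $n$-angulated. $\mathcal{A}$ is dense if every object of $\mathcal{C}$ is a direct summand of an object of $\mathcal{A}$; complete if whenever an $n$-angle $A_1\to\cdots\to A_n\to\Sigma A_1$ in $\mathcal{C}$ has $n-1$ of $A_1,\dots,A_n$ in $\mathcal{A}$, the remaining one is in $\mathcal{A}$. $\operatorname{Im}K_0(\mathcal{A})$ is the image of the homomorphism $K_0(\mathcal{A})\to K_0(\mathcal{C})$, $[A]\mapsto[A]$, induced by the inclusion. *)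

theory Defs
  imports Main
begin

record ('o, 'm) addcat =
  Obj   :: "'o set"
  Mor   :: "'m set"
  Dom   :: "'m \<Rightarrow> 'o"
  Cod   :: "'m \<Rightarrow> 'o"
  cmp   :: "'m \<Rightarrow> 'm \<Rightarrow> 'm"   (* cmp g f = g \<circ> f *)
  idm   :: "'o \<Rightarrow> 'm"
  madd  :: "'m \<Rightarrow> 'm \<Rightarrow> 'm"
  mneg  :: "'m \<Rightarrow> 'm"
  mzero :: "'o \<Rightarrow> 'o \<Rightarrow> 'm"

definition hom :: "('o, 'm) addcat \<Rightarrow> 'o \<Rightarrow> 'o \<Rightarrow> 'm set" where
  "hom C A B = {f \<in> Mor C. Dom C f = A \<and> Cod C f = B}"

definition is_category :: "('o, 'm) addcat \<Rightarrow> bool" where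
  "is_category C \<longleftrightarrow>
     (\<forall>f \<in> Mor C. Dom C f \<in> Obj C \<and> Cod C f \<in> Obj C) \<and>
     (\<forall>A \<in> Obj C. idm C A \<in> hom C A A) \<and>
     (\<forall>A \<in> Obj C. \<forall>B \<in> Obj C. \<forall>D \<in> Obj C. \<forall>f \<in> hom C A B. \<forall>g \<in> hom C B D.
         cmp C g f \<in> hom C A D) \<and>
     (\<forall>A \<in> Obj C. \<forall>B \<in> Obj C. \<forall>D \<in> Obj C. \<forall>E \<in> Obj C.
        \<forall>f \<in> hom C A B. \<forall>g \<in> hom C B D. \<forall>h \<in> hom C D E.
         cmp C h (cmp C g f) = cmp C (cmp C h g) f) \<and>
     (\<forall>A \<in> Obj C. \<forall>B \<in> Obj C. \<forall>f \<in> hom C A B.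
         cmp C f (idm C A) = f \<and> cmp C (idm C B) f = f)"

definition is_preadditive :: "('o, 'm) addcat \<Rightarrow> bool" where
  "is_preadditive C \<longleftrightarrow> is_category C \<and>
     (\<forall>A \<in> Obj C. \<forall>B \<in> Obj C.
        mzero C A B \<in> hom C A B \<and>
        (\<forall>f \<in> hom C A B. mneg C f \<in> hom C A B \<and>
            madd C (mzero C A B) f = f \<and> madd C (mneg C f) f = mzero C A B) \<and>
        (\<forall>f \<in> hom C A B. \<forall>g \<in> hom C A B.
            madd C f g \<in> hom C A B \<and> madd C f g = madd C g f) \<and>
        (\<forall>f \<in> hom C A B. \<forall>g \<in> hom C A B. \<forall>h \<in> hom C A B.
            madd C (madd C f g) h = madd C f (madd C g h))) \<and>
     (\<forall>A \<in> Obj C. \<forall>B \<in> Obj C. \<forall>D \<in> Obj C.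
        \<forall>f \<in> hom C A B. \<forall>f' \<in> hom C A B. \<forall>g \<in> hom C B D. \<forall>g' \<in> hom C B D.
          cmp C g (madd C f f') = madd C (cmp C g f) (cmp C g f') \<and>
          cmp C (madd C g g') f = madd C (cmp C g f) (cmp C g' f))"

definition is_zero_obj :: "('o, 'm) addcat \<Rightarrow> 'o \<Rightarrow> bool" where
  "is_zero_obj C Z \<longleftrightarrow> Z \<in> Obj C \<and>
     (\<forall>A \<in> Obj C. (\<exists>!f. f \<in> hom C Z A) \<and> (\<exists>!f. f \<in> hom C A Z))"

definition is_biproduct :: "('o, 'm) addcat \<Rightarrow> 'o \<Rightarrow> 'o \<Rightarrow> 'o \<Rightarrow> 'm \<Rightarrow> 'm \<Rightarrow> 'm \<Rightarrow> 'm \<Rightarrow> bool" where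
  "is_biproduct C A B S i1 i2 p1 p2 \<longleftrightarrow>
     A \<in> Obj C \<and> B \<in> Obj C \<and> S \<in> Obj C \<and>
     i1 \<in> hom C A S \<and> i2 \<in> hom C B S \<and> p1 \<in> hom C S A \<and> p2 \<in> hom C S B \<and>
     cmp C p1 i1 = idm C A \<and> cmp C p2 i2 = idm C B \<and>
     cmp C p1 i2 = mzero C B A \<and> cmp C p2 i1 = mzero C A B \<and>
     madd C (cmp C i1 p1) (cmp C i2 p2) = idm C S"

definition is_additive :: "('o, 'm) addcat \<Rightarrow> bool" where
  "is_additive C \<longleftrightarrow> is_preadditive C \<and> (\<exists>Z. is_zero_obj C Z) \<and>
     (\<forall>A \<in> Obj C. \<forall>B \<in> Obj C. \<exists>S i1 i2 p1 p2. is_biproduct C A B S i1 i2 p1 p2)"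

definition is_iso :: "('o, 'm) addcat \<Rightarrow> 'm \<Rightarrow> bool" where
  "is_iso C f \<longleftrightarrow> f \<in> Mor C \<and>
     (\<exists>g \<in> hom C (Cod C f) (Dom C f). cmp C g f = idm C (Dom C f) \<and> cmp C f g = idm C (Cod C f))"

definition isomorphic :: "('o, 'm) addcat \<Rightarrow> 'o \<Rightarrow> 'o \<Rightarrow> bool" where
  "isomorphic C A B \<longleftrightarrow> (\<exists>f \<in> hom C A B. is_iso C f)"

text \<open>An automorphism \<open>\<Sigma> = (SO, SM)\<close> (action on objects, on morphisms) of the additive category.\<close>
definition is_automorphism :: "('o, 'm) addcat \<Rightarrow> ('o \<Rightarrow> 'o) \<Rightarrow> ('m \<Rightarrow> 'm) \<Rightarrow> bool" where
  "is_automorphism C SO SM \<longleftrightarrow>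
     bij_betw SO (Obj C) (Obj C) \<and> bij_betw SM (Mor C) (Mor C) \<and>
     (\<forall>f \<in> Mor C. Dom C (SM f) = SO (Dom C f) \<and> Cod C (SM f) = SO (Cod C f)) \<and>
     (\<forall>A \<in> Obj C. SM (idm C A) = idm C (SO A)) \<and>
     (\<forall>A \<in> Obj C. \<forall>B \<in> Obj C. \<forall>D \<in> Obj C. \<forall>f \<in> hom C A B. \<forall>g \<in> hom C B D.
        SM (cmp C g f) = cmp C (SM g) (SM f)) \<and>
     (\<forall>A \<in> Obj C. \<forall>B \<in> Obj C. \<forall>f \<in> hom C A B. \<forall>g \<in> hom C A B.
        SM (madd C f g) = madd C (SM f) (SM g))"

text \<open>A sequence is given by its objects \<open>X 1, ..., X n\<close> and maps \<open>a 1, ..., a n\<close>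
  (values at other indices are irrelevant).\<close>
type_synonym ('o, 'm) seq = "(nat \<Rightarrow> 'o) \<times> (nat \<Rightarrow> 'm)"

definition is_seq :: "nat \<Rightarrow> ('o, 'm) addcat \<Rightarrow> ('o \<Rightarrow> 'o) \<Rightarrow> ('o, 'm) seq \<Rightarrow> bool" where
  "is_seq n C SO S \<longleftrightarrow>
     (\<forall>i \<in> {1..n}. fst S i \<in> Obj C) \<and>
     (\<forall>i \<in> {1..<n}. snd S i \<in> hom C (fst S i) (fst S (Suc i))) \<and>
     snd S n \<in> hom C (fst S n) (SO (fst S 1))"

definition seq_mor :: "nat \<Rightarrow> ('o, 'm) addcat \<Rightarrow> ('o \<Rightarrow> 'o) \<Rightarrow> ('m \<Rightarrow> 'm)
    \<Rightarrow> ('o, 'm) seq \<Rightarrow> ('o, 'm) seq \<Rightarrow> (nat \<Rightarrow> 'm) \<Rightarrow> bool" where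
  "seq_mor n C SO SM S T \<phi> \<longleftrightarrow> is_seq n C SO S \<and> is_seq n C SO T \<and>
     (\<forall>i \<in> {1..n}. \<phi> i \<in> hom C (fst S i) (fst T i)) \<and>
     (\<forall>i \<in> {1..<n}. cmp C (snd T i) (\<phi> i) = cmp C (\<phi> (Suc i)) (snd S i)) \<and>
     cmp C (snd T n) (\<phi> n) = cmp C (SM (\<phi> 1)) (snd S n)"

definition seq_iso :: "nat \<Rightarrow> ('o, 'm) addcat \<Rightarrow> ('o \<Rightarrow> 'o) \<Rightarrow> ('m \<Rightarrow> 'm)
    \<Rightarrow> ('o, 'm) seq \<Rightarrow> ('o, 'm) seq \<Rightarrow> (nat \<Rightarrow> 'm) \<Rightarrow> bool" where
  "seq_iso n C SO SM S T \<phi> \<longleftrightarrow> seq_mor n C SO SM S T \<phi> \<and> (\<forall>i \<in> {1..n}. is_iso C (\<phi> i))"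

definition is_seq_dsum :: "nat \<Rightarrow> ('o, 'm) addcat \<Rightarrow> ('o \<Rightarrow> 'o) \<Rightarrow> ('m \<Rightarrow> 'm)
    \<Rightarrow> ('o, 'm) seq \<Rightarrow> ('o, 'm) seq \<Rightarrow> ('o, 'm) seq \<Rightarrow> bool" where
  "is_seq_dsum n C SO SM S X Y \<longleftrightarrow>
     (\<exists>i1 i2 p1 p2.
        seq_mor n C SO SM X S i1 \<and> seq_mor n C SO SM Y S i2 \<and>
        seq_mor n C SO SM S X p1 \<and> seq_mor n C SO SM S Y p2 \<and>
        (\<forall>i \<in> {1..n}. is_biproduct C (fst X i) (fst Y i) (fst S i) (i1 i) (i2 i) (p1 i) (p2 i)))"

definition trivial_seq :: "nat \<Rightarrow> ('o, 'm) addcat \<Rightarrow> ('o \<Rightarrow> 'o) \<Rightarrow> 'o \<Rightarrow> 'o \<Rightarrow> ('o, 'm) seq" where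
  "trivial_seq n C SO A Z =
     (\<lambda>i. if i \<le> 2 then A else Z,
      \<lambda>i. if i = 1 then idm C A
           else if i = 2 then mzero C A Z
           else if i < n then mzero C Z Z
           else mzero C Z (SO A))"

definition left_rot :: "nat \<Rightarrow> ('o, 'm) addcat \<Rightarrow> ('o \<Rightarrow> 'o) \<Rightarrow> ('m \<Rightarrow> 'm)
    \<Rightarrow> ('o, 'm) seq \<Rightarrow> ('o, 'm) seq" where
  "left_rot n C SO SM S =
     (\<lambda>i. if i < n then fst S (Suc i) else SO (fst S 1),
      \<lambda>i. if i < n then snd S (Suc i)
           else if even n then SM (snd S 1) else mneg C (SM (snd S 1)))"

text \<open>The mapping cone of \<open>\<phi>\<close>, built from chosen biproducts \<open>D i\<close> of
  \<open>A_{i+1}\<close> and \<open>B_i\<close> (with \<open>A_{n+1} = \<Sigma> A_1\<close>).\<close>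
definition cone_seq :: "nat \<Rightarrow> ('o, 'm) addcat \<Rightarrow> ('m \<Rightarrow> 'm)
    \<Rightarrow> ('o, 'm) seq \<Rightarrow> ('o, 'm) seq \<Rightarrow> (nat \<Rightarrow> 'm)
    \<Rightarrow> (nat \<Rightarrow> 'o) \<Rightarrow> (nat \<Rightarrow> 'm) \<Rightarrow> (nat \<Rightarrow> 'm) \<Rightarrow> (nat \<Rightarrow> 'm) \<Rightarrow> (nat \<Rightarrow> 'm)
    \<Rightarrow> ('o, 'm) seq" where
  "cone_seq n C SM S T \<phi> D j1 j2 q1 q2 =
     (D,
      \<lambda>i. if i < n then
             madd C (cmp C (j1 (Suc i)) (cmp C (mneg C (snd S (Suc i))) (q1 i)))
                    (cmp C (j2 (Suc i)) (madd C (cmp C (\<phi> (Suc i)) (q1 i)) (cmp C (snd T i) (q2 i))))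
           else
             madd C (cmp C (SM (j1 1)) (cmp C (mneg C (SM (snd S 1))) (q1 n)))
                    (cmp C (SM (j2 1)) (madd C (cmp C (SM (\<phi> 1)) (q1 n)) (cmp C (snd T n) (q2 n)))))"

definition n_angulated :: "nat \<Rightarrow> ('o, 'm) addcat \<Rightarrow> ('o \<Rightarrow> 'o) \<Rightarrow> ('m \<Rightarrow> 'm)
    \<Rightarrow> ('o, 'm) seq set \<Rightarrow> bool" where
  "n_angulated n C SO SM N \<longleftrightarrow>
     is_additive C \<and> is_automorphism C SO SM \<and>
     (\<forall>S \<in> N. is_seq n C SO S) \<and>
     \<comment> \<open>(N1)(a)\<close>
     (\<forall>S X Y. is_seq n C SO S \<and> is_seq n C SO X \<and> is_seq n C SO Y \<and>
         is_seq_dsum n C SO SM S X Y \<longrightarrow> (S \<in> N \<longleftrightarrow> X \<in> N \<and> Y \<in> N)) \<and>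
     (\<forall>S T \<phi>. S \<in> N \<and> seq_iso n C SO SM S T \<phi> \<longrightarrow> T \<in> N) \<and>
     \<comment> \<open>(N1)(b)\<close>
     (\<forall>A \<in> Obj C. \<forall>Z. is_zero_obj C Z \<longrightarrow> trivial_seq n C SO A Z \<in> N) \<and>
     \<comment> \<open>(N1)(c)\<close>
     (\<forall>f \<in> Mor C. \<exists>S \<in> N. fst S 1 = Dom C f \<and> fst S 2 = Cod C f \<and> snd S 1 = f) \<and>
     \<comment> \<open>(N2)\<close>
     (\<forall>S. is_seq n C SO S \<longrightarrow> (S \<in> N \<longleftrightarrow> left_rot n C SO SM S \<in> N)) \<and>
     \<comment> \<open>(N3)\<close>
     (\<forall>S \<in> N. \<forall>T \<in> N. \<forall>f1 \<in> hom C (fst S 1) (fst T 1). \<forall>f2 \<in> hom C (fst S 2) (fst T 2).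
        cmp C (snd T 1) f1 = cmp C f2 (snd S 1) \<longrightarrow>
        (\<exists>\<phi>. \<phi> 1 = f1 \<and> \<phi> 2 = f2 \<and> seq_mor n C SO SM S T \<phi>)) \<and>
     \<comment> \<open>(N4)\<close>
     (\<forall>S \<in> N. \<forall>T \<in> N. \<forall>f1 \<in> hom C (fst S 1) (fst T 1). \<forall>f2 \<in> hom C (fst S 2) (fst T 2).
        cmp C (snd T 1) f1 = cmp C f2 (snd S 1) \<longrightarrow>
        (\<exists>\<phi>. \<phi> 1 = f1 \<and> \<phi> 2 = f2 \<and> seq_mor n C SO SM S T \<phi> \<and>
           (\<forall>D j1 j2 q1 q2.
              (\<forall>i \<in> {1..n}. is_biproduct C
                   (if i < n then fst S (Suc i) else SO (fst S 1)) (fst T i)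
                   (D i) (j1 i) (j2 i) (q1 i) (q2 i))
              \<longrightarrow> cone_seq n C SM S T \<phi> D j1 j2 q1 q2 \<in> N)))"

definition full_subcat :: "('o, 'm) addcat \<Rightarrow> 'o set \<Rightarrow> ('o, 'm) addcat" where
  "full_subcat C A = C\<lparr>Obj := A, Mor := {f \<in> Mor C. Dom C f \<in> A \<and> Cod C f \<in> A}\<rparr>"

text \<open>\<open>A\<close> (an object set, i.e. a full subcategory) with n-angles \<open>NA\<close> is an n-angulated
  subcategory of \<open>(C, \<Sigma>, N)\<close>; the inclusion is n-angulated via a natural isomorphism \<open>\<eta>\<close>.\<close>
definition n_angulated_subcat :: "nat \<Rightarrow> ('o, 'm) addcat \<Rightarrow> ('o \<Rightarrow> 'o) \<Rightarrow> ('m \<Rightarrow> 'm)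
    \<Rightarrow> ('o, 'm) seq set \<Rightarrow> 'o set \<Rightarrow> ('o, 'm) seq set \<Rightarrow> bool" where
  "n_angulated_subcat n C SO SM N A NA \<longleftrightarrow>
     A \<subseteq> Obj C \<and>
     (\<forall>X \<in> A. \<forall>Y \<in> Obj C. isomorphic C X Y \<longrightarrow> Y \<in> A) \<and>
     n_angulated n (full_subcat C A) SO SM NA \<and>
     (\<exists>\<eta>. (\<forall>X \<in> A. \<eta> X \<in> hom C (SO X) (SO X) \<and> is_iso C (\<eta> X)) \<and>
          (\<forall>f \<in> Mor C. Dom C f \<in> A \<and> Cod C f \<in> A \<longrightarrow>
              cmp C (\<eta> (Cod C f)) (SM f) = cmp C (SM f) (\<eta> (Dom C f))) \<and>
          (\<forall>S \<in> NA. (fst S, (snd S)(n := cmp C (\<eta> (fst S 1)) (snd S n))) \<in> N))"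

definition dense_subcat :: "('o, 'm) addcat \<Rightarrow> 'o set \<Rightarrow> bool" where
  "dense_subcat C A \<longleftrightarrow>
     (\<forall>X \<in> Obj C. \<exists>S \<in> A. \<exists>Y i1 i2 p1 p2. is_biproduct C X Y S i1 i2 p1 p2)"

definition complete_subcat :: "nat \<Rightarrow> ('o, 'm) seq set \<Rightarrow> 'o set \<Rightarrow> bool" where
  "complete_subcat n N A \<longleftrightarrow>
     (\<forall>S \<in> N. \<forall>k \<in> {1..n}. (\<forall>i \<in> {1..n} - {k}. fst S i \<in> A) \<longrightarrow> fst S k \<in> A)"

text \<open>Elements of the free abelian group \<open>F(C)\<close> on isomorphism classes are represented as
  integer-valued functions on isomorphism classes (sets of objects).\<close>
definition iso_class :: "('o, 'm) addcat \<Rightarrow> 'o \<Rightarrow> 'o set" where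
  "iso_class C X = {Y \<in> Obj C. isomorphic C X Y}"

definition gen :: "('o, 'm) addcat \<Rightarrow> 'o \<Rightarrow> ('o set \<Rightarrow> int)" where
  "gen C X = (\<lambda>K. if K = iso_class C X then 1 else 0)"

definition euler_char :: "nat \<Rightarrow> ('o, 'm) addcat \<Rightarrow> ('o, 'm) seq \<Rightarrow> ('o set \<Rightarrow> int)" where
  "euler_char n C S = (\<lambda>K. \<Sum>i = 1..n. (-1) ^ (i + 1) * gen C (fst S i) K)"

inductive_set zspan :: "('a \<Rightarrow> int) set \<Rightarrow> ('a \<Rightarrow> int) set" for G where
  zspan_zero: "(\<lambda>_. 0) \<in> zspan G"
| zspan_gen: "g \<in> G \<Longrightarrow> g \<in> zspan G"
| zspan_diff: "x \<in> zspan G \<Longrightarrow> y \<in> zspan G \<Longrightarrow> (\<lambda>K. x K - y K) \<in> zspan G"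

definition K0_relations :: "nat \<Rightarrow> ('o, 'm) addcat \<Rightarrow> ('o, 'm) seq set \<Rightarrow> ('o set \<Rightarrow> int) set" where
  "K0_relations n C N =
     {euler_char n C S | S. S \<in> N} \<union> (if even n then {gen C Z | Z. is_zero_obj C Z} else {})"

text \<open>\<open>[X] = 0\<close> in \<open>K_0(C)/Im K_0(A)\<close>: the preimage of \<open>Im K_0(A)\<close> in \<open>F(C)\<close> is the
  subgroup generated by \<open>R(C)\<close> and the generators \<open>\<langle>A\<rangle>\<close>, \<open>A \<in> A\<close>.\<close>
definition class_zero_mod_image :: "nat \<Rightarrow> ('o, 'm) addcat \<Rightarrow> ('o, 'm) seq set \<Rightarrow> 'o set \<Rightarrow> 'o \<Rightarrow> bool" where
  "class_zero_mod_image n C N A X \<longleftrightarrow>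
     gen C X \<in> zspan (K0_relations n C N \<union> {gen C Y | Y. Y \<in> A})"

end

theory Submission
  imports Defs "HOL-Library.Multiset"
begin


locale addc =
  fixes C :: "('o, 'm) addcat"
  assumes additive: "is_additive C"
begin

lemma pre: "is_preadditive C"
  using additive unfolding is_additive_def by blast
lemma cat: "is_category C"
  using pre unfolding is_preadditive_def by blast

lemma hom_iff: "f \<in> hom C A B \<longleftrightarrow> f \<in> Mor C \<and> Dom C f = A \<and> Cod C f = B"
  by (auto simp: hom_def)

lemma mor_dom[simp]: "f \<in> Mor C \<Longrightarrow> Dom C f \<in> Obj C"
  and mor_cod[simp]: "f \<in> Mor C \<Longrightarrow> Cod C f \<in> Obj C"
  using cat unfolding is_category_def by auto

lemma homI: "f \<in> Mor C \<Longrightarrow> f \<in> hom C (Dom C f) (Cod C f)" by (simp add: hom_iff)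

lemma cat3: "\<forall>A \<in> Obj C. \<forall>B \<in> Obj C. \<forall>D \<in> Obj C. \<forall>f \<in> hom C A B. \<forall>g \<in> hom C B D.
         cmp C g f \<in> hom C A D"
  using cat unfolding is_category_def by blast
lemma cat4: "\<forall>A \<in> Obj C. \<forall>B \<in> Obj C. \<forall>D \<in> Obj C. \<forall>E \<in> Obj C.
        \<forall>f \<in> hom C A B. \<forall>g \<in> hom C B D. \<forall>h \<in> hom C D E.
         cmp C h (cmp C g f) = cmp C (cmp C h g) f"
  using cat unfolding is_category_def by blast
lemma cat5: "\<forall>A \<in> Obj C. \<forall>B \<in> Obj C. \<forall>f \<in> hom C A B.
         cmp C f (idm C A) = f \<and> cmp C (idm C B) f = f"
  using cat unfolding is_category_def by blast
lemma cat2: "\<forall>A \<in> Obj C. idm C A \<in> hom C A A"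
  using cat unfolding is_category_def by blast

lemma cmp_ok:
  assumes "f \<in> Mor C" "g \<in> Mor C" "Cod C f = Dom C g"
  shows "cmp C g f \<in> Mor C \<and> Dom C (cmp C g f) = Dom C f \<and> Cod C (cmp C g f) = Cod C g"
proof -
  have "cmp C g f \<in> hom C (Dom C f) (Cod C g)"
    using cat3[rule_format, OF mor_dom[OF assms(1)] mor_cod[OF assms(1)] mor_cod[OF assms(2)] homI[OF assms(1)]]
      homI[OF assms(2)] assms(3) by simp
  thus ?thesis by (auto simp: hom_iff)
qed

lemma cmp_mor[simp]: "f \<in> Mor C \<Longrightarrow> g \<in> Mor C \<Longrightarrow> Cod C f = Dom C g \<Longrightarrow> cmp C g f \<in> Mor C"
  and cmp_dom[simp]: "f \<in> Mor C \<Longrightarrow> g \<in> Mor C \<Longrightarrow> Cod C f = Dom C g \<Longrightarrow> Dom C (cmp C g f) = Dom C f"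
  and cmp_cod[simp]: "f \<in> Mor C \<Longrightarrow> g \<in> Mor C \<Longrightarrow> Cod C f = Dom C g \<Longrightarrow> Cod C (cmp C g f) = Cod C g"
  using cmp_ok by auto

lemma cmp_assoc[simp]:
  assumes "f \<in> Mor C" "g \<in> Mor C" "h \<in> Mor C" "Cod C f = Dom C g" "Cod C g = Dom C h"
  shows "cmp C (cmp C h g) f = cmp C h (cmp C g f)"
proof -
  have "g \<in> hom C (Cod C f) (Cod C g)" "h \<in> hom C (Cod C g) (Cod C h)"
    using assms by (auto simp: hom_iff)
  thus ?thesis
    using cat4[rule_format, OF mor_dom[OF assms(1)] mor_cod[OF assms(1)] mor_cod[OF assms(2)] mor_cod[OF assms(3)] homI[OF assms(1)]]
    by simp
qed

lemma idm_hom: "A \<in> Obj C \<Longrightarrow> idm C A \<in> hom C A A" using cat2 by blast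

lemma idm_ok[simp]: "A \<in> Obj C \<Longrightarrow> idm C A \<in> Mor C"
  "A \<in> Obj C \<Longrightarrow> Dom C (idm C A) = A"  "A \<in> Obj C \<Longrightarrow> Cod C (idm C A) = A"
  using idm_hom by (auto simp: hom_iff)

lemma idm_r[simp]: "f \<in> Mor C \<Longrightarrow> Dom C f = A \<Longrightarrow> cmp C f (idm C A) = f"
  using cat5[rule_format, OF mor_dom mor_cod homI] by blast
lemma idm_l[simp]: "f \<in> Mor C \<Longrightarrow> Cod C f = A \<Longrightarrow> cmp C (idm C A) f = f"
  using cat5[rule_format, OF mor_dom mor_cod homI] by blast

lemma pre1: "\<forall>A \<in> Obj C. \<forall>B \<in> Obj C.
        mzero C A B \<in> hom C A B \<and>
        (\<forall>f \<in> hom C A B. mneg C f \<in> hom C A B \<and>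
            madd C (mzero C A B) f = f \<and> madd C (mneg C f) f = mzero C A B) \<and>
        (\<forall>f \<in> hom C A B. \<forall>g \<in> hom C A B.
            madd C f g \<in> hom C A B \<and> madd C f g = madd C g f) \<and>
        (\<forall>f \<in> hom C A B. \<forall>g \<in> hom C A B. \<forall>h \<in> hom C A B.
            madd C (madd C f g) h = madd C f (madd C g h))"
  using pre unfolding is_preadditive_def by blast
lemma pre2: "\<forall>A \<in> Obj C. \<forall>B \<in> Obj C. \<forall>D \<in> Obj C.
        \<forall>f \<in> hom C A B. \<forall>f' \<in> hom C A B. \<forall>g \<in> hom C B D. \<forall>g' \<in> hom C B D.
          cmp C g (madd C f f') = madd C (cmp C g f) (cmp C g f') \<and>
          cmp C (madd C g g') f = madd C (cmp C g f) (cmp C g' f)"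
  using pre unfolding is_preadditive_def by blast

lemma mzero_hom: "A \<in> Obj C \<Longrightarrow> B \<in> Obj C \<Longrightarrow> mzero C A B \<in> hom C A B"
  using pre1 by blast

lemma mzero_ok[simp]: "A \<in> Obj C \<Longrightarrow> B \<in> Obj C \<Longrightarrow> mzero C A B \<in> Mor C"
  "A \<in> Obj C \<Longrightarrow> B \<in> Obj C \<Longrightarrow> Dom C (mzero C A B) = A"
  "A \<in> Obj C \<Longrightarrow> B \<in> Obj C \<Longrightarrow> Cod C (mzero C A B) = B"
  using mzero_hom by (auto simp: hom_iff)

lemma madd_ok:
  assumes "f \<in> Mor C" "g \<in> Mor C" "Dom C f = Dom C g" "Cod C f = Cod C g"
  shows "madd C f g \<in> Mor C \<and> Dom C (madd C f g) = Dom C f \<and> Cod C (madd C f g) = Cod C f"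
proof -
  have "g \<in> hom C (Dom C f) (Cod C f)" using assms by (simp add: hom_iff)
  hence "madd C f g \<in> hom C (Dom C f) (Cod C f)"
    using pre1[rule_format, OF mor_dom[OF assms(1)] mor_cod[OF assms(1)]] homI[OF assms(1)] by blast
  thus ?thesis by (simp add: hom_iff)
qed

lemma madd_mor[simp]: "f \<in> Mor C \<Longrightarrow> g \<in> Mor C \<Longrightarrow> Dom C f = Dom C g \<Longrightarrow> Cod C f = Cod C g \<Longrightarrow> madd C f g \<in> Mor C"
  and madd_dom[simp]: "f \<in> Mor C \<Longrightarrow> g \<in> Mor C \<Longrightarrow> Dom C f = Dom C g \<Longrightarrow> Cod C f = Cod C g \<Longrightarrow> Dom C (madd C f g) = Dom C f"
  and madd_cod[simp]: "f \<in> Mor C \<Longrightarrow> g \<in> Mor C \<Longrightarrow> Dom C f = Dom C g \<Longrightarrow> Cod C f = Cod C g \<Longrightarrow> Cod C (madd C f g) = Cod C f"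
  using madd_ok by auto

lemma mneg_hom: "f \<in> Mor C \<Longrightarrow> mneg C f \<in> hom C (Dom C f) (Cod C f)"
proof -
  assume a: "f \<in> Mor C"
  have "Dom C f \<in> Obj C" "Cod C f \<in> Obj C" "f \<in> hom C (Dom C f) (Cod C f)" using a by (auto simp: hom_iff)
  thus ?thesis using pre1 by blast
qed

lemma mneg_ok[simp]: "f \<in> Mor C \<Longrightarrow> mneg C f \<in> Mor C"
  "f \<in> Mor C \<Longrightarrow> Dom C (mneg C f) = Dom C f" "f \<in> Mor C \<Longrightarrow> Cod C (mneg C f) = Cod C f"
  using mneg_hom by (auto simp: hom_iff)

lemma madd_comm: "f \<in> Mor C \<Longrightarrow> g \<in> Mor C \<Longrightarrow> Dom C f = Dom C g \<Longrightarrow> Cod C f = Cod C g \<Longrightarrow> madd C f g = madd C g f"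
proof -
  assume a: "f \<in> Mor C" "g \<in> Mor C" "Dom C f = Dom C g" "Cod C f = Cod C g"
  hence "g \<in> hom C (Dom C f) (Cod C f)" by (simp add: hom_iff)
  thus ?thesis using pre1[rule_format, OF mor_dom[OF a(1)] mor_cod[OF a(1)]] homI[OF a(1)] by blast
qed

lemma madd_assoc: "f \<in> Mor C \<Longrightarrow> g \<in> Mor C \<Longrightarrow> h \<in> Mor C \<Longrightarrow> Dom C f = Dom C g \<Longrightarrow> Cod C f = Cod C g
  \<Longrightarrow> Dom C h = Dom C g \<Longrightarrow> Cod C h = Cod C g \<Longrightarrow> madd C (madd C f g) h = madd C f (madd C g h)"
proof -
  assume a: "f \<in> Mor C" "g \<in> Mor C" "h \<in> Mor C" "Dom C f = Dom C g" "Cod C f = Cod C g"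
    "Dom C h = Dom C g" "Cod C h = Cod C g"
  hence "g \<in> hom C (Dom C f) (Cod C f)" "h \<in> hom C (Dom C f) (Cod C f)" by (auto simp add: hom_iff)
  thus ?thesis using pre1[rule_format, OF mor_dom[OF a(1)] mor_cod[OF a(1)]] homI[OF a(1)] by blast
qed

lemma zero_l[simp]: "f \<in> Mor C \<Longrightarrow> Dom C f = A \<Longrightarrow> Cod C f = B \<Longrightarrow> madd C (mzero C A B) f = f"
proof -
  assume a: "f \<in> Mor C" "Dom C f = A" "Cod C f = B"
  have "A \<in> Obj C" "B \<in> Obj C" "f \<in> hom C A B" using a by (auto simp: hom_iff)
  thus ?thesis using pre1 by blast
qed

lemma zero_r[simp]: "f \<in> Mor C \<Longrightarrow> Dom C f = A \<Longrightarrow> Cod C f = B \<Longrightarrow> madd C f (mzero C A B) = f"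
  by (subst madd_comm) auto

lemma neg_l: "f \<in> Mor C \<Longrightarrow> madd C (mneg C f) f = mzero C (Dom C f) (Cod C f)"
proof -
  assume a: "f \<in> Mor C"
  have "Dom C f \<in> Obj C" "Cod C f \<in> Obj C" "f \<in> hom C (Dom C f) (Cod C f)" using a by (auto simp: hom_iff)
  thus ?thesis using pre1 by blast
qed

lemma distl[simp]: "f \<in> Mor C \<Longrightarrow> f' \<in> Mor C \<Longrightarrow> g \<in> Mor C \<Longrightarrow> Dom C f = Dom C f' \<Longrightarrow> Cod C f = Cod C f'
  \<Longrightarrow> Cod C f = Dom C g \<Longrightarrow> cmp C g (madd C f f') = madd C (cmp C g f) (cmp C g f')"
proof -
  assume a: "f \<in> Mor C" "f' \<in> Mor C" "g \<in> Mor C" "Dom C f = Dom C f'" "Cod C f = Cod C f'" "Cod C f = Dom C g"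
  hence "f' \<in> hom C (Dom C f) (Cod C f)" "g \<in> hom C (Cod C f) (Cod C g)" by (auto simp add: hom_iff)
  thus ?thesis using pre2[rule_format, OF mor_dom[OF a(1)] mor_cod[OF a(1)] mor_cod[OF a(3)] homI[OF a(1)]] by blast
qed

lemma distr[simp]: "f \<in> Mor C \<Longrightarrow> g' \<in> Mor C \<Longrightarrow> g \<in> Mor C \<Longrightarrow> Dom C g = Dom C g' \<Longrightarrow> Cod C g = Cod C g'
  \<Longrightarrow> Cod C f = Dom C g \<Longrightarrow> cmp C (madd C g g') f = madd C (cmp C g f) (cmp C g' f)"
proof -
  assume a: "f \<in> Mor C" "g' \<in> Mor C" "g \<in> Mor C" "Dom C g = Dom C g'" "Cod C g = Cod C g'" "Cod C f = Dom C g"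
  hence "g' \<in> hom C (Cod C f) (Cod C g)" "g \<in> hom C (Cod C f) (Cod C g)" by (auto simp add: hom_iff)
  thus ?thesis using pre2[rule_format, OF mor_dom[OF a(1)] mor_cod[OF a(1)] mor_cod[OF a(3)] homI[OF a(1)] homI[OF a(1)]] by blast
qed

lemma cancel_self:
  assumes "x \<in> Mor C" "madd C x x = x"
  shows "x = mzero C (Dom C x) (Cod C x)"
proof -
  have "madd C (mneg C x) (madd C x x) = madd C (mneg C x) x" using assms by simp
  hence "madd C (madd C (mneg C x) x) x = madd C (mneg C x) x"
    using assms by (simp add: madd_assoc)
  thus ?thesis using assms by (simp add: neg_l)
qed

lemma cmp_zero_r[simp]: "g \<in> Mor C \<Longrightarrow> Dom C g = B \<Longrightarrow> A \<in> Obj C \<Longrightarrow> cmp C g (mzero C A B) = mzero C A (Cod C g)"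
proof -
  assume a: "g \<in> Mor C" "Dom C g = B" "A \<in> Obj C"
  let ?x = "cmp C g (mzero C A B)"
  have "madd C ?x ?x = cmp C g (madd C (mzero C A B) (mzero C A B))"
    using a by (subst distl) auto
  also have "\<dots> = ?x" using a mor_dom[of g] mor_cod[of f] by simp
  finally have "?x = mzero C (Dom C ?x) (Cod C ?x)" using a mor_dom[of g] mor_cod[of f] by (intro cancel_self) auto
  thus ?thesis using a mor_dom[of g] by simp
qed

lemma cmp_zero_l[simp]: "f \<in> Mor C \<Longrightarrow> Cod C f = B \<Longrightarrow> D \<in> Obj C \<Longrightarrow> cmp C (mzero C B D) f = mzero C (Dom C f) D"
proof -
  assume a: "f \<in> Mor C" "Cod C f = B" "D \<in> Obj C"
  let ?x = "cmp C (mzero C B D) f"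
  have "madd C ?x ?x = cmp C (madd C (mzero C B D) (mzero C B D)) f"
    using a by (subst distr) auto
  also have "\<dots> = ?x" using a mor_dom[of g] mor_cod[of f] by simp
  finally have "?x = mzero C (Dom C ?x) (Cod C ?x)" using a mor_dom[of g] mor_cod[of f] by (intro cancel_self) auto
  thus ?thesis using a mor_cod[of f] by simp
qed

end



context addc
begin

lemma lift: "cmp C g f = h \<Longrightarrow> f \<in> Mor C \<Longrightarrow> g \<in> Mor C \<Longrightarrow> Cod C f = Dom C g \<Longrightarrow> w \<in> Mor C
  \<Longrightarrow> Cod C w = Dom C f \<Longrightarrow> cmp C g (cmp C f w) = cmp C h w"
  by (metis cmp_assoc)

lemma zero_into:
  assumes "is_zero_obj C Z" "f \<in> Mor C" "g \<in> Mor C" "Dom C f = Dom C g" "Cod C f = Z" "Cod C g = Z"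
  shows "f = g"
proof -
  have "f \<in> hom C (Dom C f) Z" "g \<in> hom C (Dom C f) Z" using assms by (auto simp: hom_iff)
  moreover have "Dom C f \<in> Obj C" using assms by simp
  ultimately show ?thesis using assms(1) unfolding is_zero_obj_def by blast
qed

lemma zero_from:
  assumes "is_zero_obj C Z" "f \<in> Mor C" "g \<in> Mor C" "Cod C f = Cod C g" "Dom C f = Z" "Dom C g = Z"
  shows "f = g"
proof -
  have "f \<in> hom C Z (Cod C f)" "g \<in> hom C Z (Cod C f)" using assms by (auto simp: hom_iff)
  moreover have "Cod C f \<in> Obj C" using assms by simp
  ultimately show ?thesis using assms(1) unfolding is_zero_obj_def by blast
qed

lemma zero_obj: "is_zero_obj C Z \<Longrightarrow> Z \<in> Obj C" by (simp add: is_zero_obj_def)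

lemma iso_I:
  assumes "f \<in> Mor C" "g \<in> Mor C" "Dom C f = A" "Cod C f = B" "Dom C g = B" "Cod C g = A"
    "cmp C g f = idm C A" "cmp C f g = idm C B"
  shows "is_iso C f" "isomorphic C A B"
proof -
  have g: "g \<in> hom C (Cod C f) (Dom C f)" using assms by (simp add: hom_iff)
  show "is_iso C f" unfolding is_iso_def using assms g by auto
  moreover have "f \<in> hom C A B" using assms by (simp add: hom_iff)
  ultimately show "isomorphic C A B" unfolding isomorphic_def by blast
qed

lemma iso_E:
  assumes "isomorphic C A B"
  obtains f g where "f \<in> Mor C" "g \<in> Mor C" "Dom C f = A" "Cod C f = B" "Dom C g = B" "Cod C g = A"
    "cmp C g f = idm C A" "cmp C f g = idm C B"
proof -
  from assms obtain f where f: "f \<in> hom C A B" "is_iso C f" unfolding isomorphic_def by blast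
  then obtain g where "g \<in> hom C (Cod C f) (Dom C f)" "cmp C g f = idm C (Dom C f)" "cmp C f g = idm C (Cod C f)"
    unfolding is_iso_def by blast
  thus ?thesis using that f by (auto simp: hom_iff)
qed

lemma iso_obj: "isomorphic C A B \<Longrightarrow> A \<in> Obj C \<and> B \<in> Obj C"
  by (erule iso_E) (metis mor_cod mor_dom)

lemma iso_refl: "A \<in> Obj C \<Longrightarrow> isomorphic C A A"
  by (rule iso_I(2)[of "idm C A" "idm C A"]) auto

lemma iso_sym: "isomorphic C A B \<Longrightarrow> isomorphic C B A"
  by (erule iso_E) (rule iso_I(2), assumption+)

lemma iso_trans: assumes "isomorphic C A B" "isomorphic C B D" shows "isomorphic C A D"
proof -
  obtain f g where f: "f \<in> Mor C" "g \<in> Mor C" "Dom C f = A" "Cod C f = B" "Dom C g = B" "Cod C g = A"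
    "cmp C g f = idm C A" "cmp C f g = idm C B" using assms(1) by (rule iso_E)
  obtain f' g' where f': "f' \<in> Mor C" "g' \<in> Mor C" "Dom C f' = B" "Cod C f' = D" "Dom C g' = D" "Cod C g' = B"
    "cmp C g' f' = idm C B" "cmp C f' g' = idm C D" using assms(2) by (rule iso_E)
  have "cmp C (cmp C g g') (cmp C f' f) = idm C A"
  proof -
    have "cmp C (cmp C g g') (cmp C f' f) = cmp C g (cmp C (cmp C g' f') f)" using f f' by (simp add: lift[OF f'(7)])
    also have "\<dots> = idm C A" using f f' by simp
    finally show ?thesis .
  qed
  moreover have "cmp C (cmp C f' f) (cmp C g g') = idm C D"
  proof -
    have "cmp C (cmp C f' f) (cmp C g g') = cmp C f' (cmp C (cmp C f g) g')" using f f' by (simp add: lift[OF f(8)])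
    also have "\<dots> = idm C D" using f f' by simp
    finally show ?thesis .
  qed
  ultimately show ?thesis using f f' by (intro iso_I(2)[of "cmp C f' f" "cmp C g g'"]) auto
qed

lemma iso_zero: "is_zero_obj C Z \<Longrightarrow> is_zero_obj C Z' \<Longrightarrow> isomorphic C Z Z'"
  apply (rule iso_I(2)[of "mzero C Z Z'" "mzero C Z' Z"])
  by (auto simp: zero_obj intro: zero_into zero_from)

section \<open>Biproducts\<close>

lemma bp_facts:
  assumes "is_biproduct C X Y S i1 i2 p1 p2"
  shows "X \<in> Obj C" "Y \<in> Obj C" "S \<in> Obj C"
    "i1 \<in> Mor C" "Dom C i1 = X" "Cod C i1 = S"
    "i2 \<in> Mor C" "Dom C i2 = Y" "Cod C i2 = S"
    "p1 \<in> Mor C" "Dom C p1 = S" "Cod C p1 = X"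
    "p2 \<in> Mor C" "Dom C p2 = S" "Cod C p2 = Y"
    "cmp C p1 i1 = idm C X" "cmp C p2 i2 = idm C Y"
    "cmp C p1 i2 = mzero C Y X" "cmp C p2 i1 = mzero C X Y"
    "madd C (cmp C i1 p1) (cmp C i2 p2) = idm C S"
  using assms unfolding is_biproduct_def hom_iff by auto

lemma bp_comp:
  assumes "is_biproduct C X Y S i1 i2 p1 p2" "u \<in> Mor C"
  shows "Cod C u = X \<Longrightarrow> cmp C p1 (cmp C i1 u) = u"
    "Cod C u = Y \<Longrightarrow> cmp C p2 (cmp C i2 u) = u"
    "Cod C u = Y \<Longrightarrow> cmp C p1 (cmp C i2 u) = mzero C (Dom C u) X"
    "Cod C u = X \<Longrightarrow> cmp C p2 (cmp C i1 u) = mzero C (Dom C u) Y"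
proof -
  note f = bp_facts[OF assms(1)]
  show "Cod C u = X \<Longrightarrow> cmp C p1 (cmp C i1 u) = u"
    using f assms(2) cmp_assoc[of u i1 p1] by simp
  show "Cod C u = Y \<Longrightarrow> cmp C p2 (cmp C i2 u) = u"
    using f assms(2) cmp_assoc[of u i2 p2] by simp
  show "Cod C u = Y \<Longrightarrow> cmp C p1 (cmp C i2 u) = mzero C (Dom C u) X"
    using f assms(2) cmp_assoc[of u i2 p1] by simp
  show "Cod C u = X \<Longrightarrow> cmp C p2 (cmp C i1 u) = mzero C (Dom C u) Y"
    using f assms(2) cmp_assoc[of u i1 p2] by simp
qed

lemma bp_ext_out:
  assumes "is_biproduct C X Y S i1 i2 p1 p2" "u \<in> Mor C" "v \<in> Mor C" "Dom C u = S" "Dom C v = S"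
    "Cod C u = Cod C v" "cmp C u i1 = cmp C v i1" "cmp C u i2 = cmp C v i2"
  shows "u = v"
proof -
  note f = bp_facts[OF assms(1)]
  have "u = cmp C u (madd C (cmp C i1 p1) (cmp C i2 p2))" using f assms by simp
  also have "\<dots> = madd C (cmp C u (cmp C i1 p1)) (cmp C u (cmp C i2 p2))"
    using f assms by (subst distl) auto
  also have "\<dots> = madd C (cmp C v (cmp C i1 p1)) (cmp C v (cmp C i2 p2))"
    using f assms by (simp add: lift[OF assms(7)] lift[OF assms(8)])
  also have "\<dots> = cmp C v (madd C (cmp C i1 p1) (cmp C i2 p2))"
    using f assms by (subst distl) auto
  also have "\<dots> = v" using f assms by simp
  finally show ?thesis .
qed

lemma GL:
  assumes a: "is_biproduct C Xa Ya Da a1 a2 b1 b2" and b: "is_biproduct C Xb Yb Db c1 c2 d1 d2"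
    and x: "x \<in> Mor C" "Dom C x = Xa" "Cod C x = Xb"
    and y: "y \<in> Mor C" "Dom C y = Ya" "Cod C y = Yb"
    and s: "s = madd C (cmp C c1 (cmp C x b1)) (cmp C c2 (cmp C y b2))"
  shows "s \<in> Mor C" "Dom C s = Da" "Cod C s = Db"
    "cmp C s a1 = cmp C c1 x" "cmp C s a2 = cmp C c2 y"
    "cmp C d1 s = cmp C x b1" "cmp C d2 s = cmp C y b2"
proof -
  note fa = bp_facts[OF a] and fb = bp_facts[OF b]
  note ca = bp_comp[OF a] and cb = bp_comp[OF b]
  show "s \<in> Mor C" "Dom C s = Da" "Cod C s = Db" using s fa fb x y by auto
  show "cmp C s a1 = cmp C c1 x" using s fa fb x y by simp
  show "cmp C s a2 = cmp C c2 y" using s fa fb x y by simp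
  show "cmp C d1 s = cmp C x b1" using s fa fb x y by (simp add: cb)
  show "cmp C d2 s = cmp C y b2" using s fa fb x y by (simp add: cb)
qed

end



context addc
begin

lemma bp_iso:
  assumes a: "is_biproduct C X Y S i1 i2 p1 p2" and b: "is_biproduct C X' Y' S' j1 j2 q1 q2"
    and "isomorphic C X X'" "isomorphic C Y Y'"
  shows "isomorphic C S S'"
proof -
  obtain f f' where f: "f \<in> Mor C" "f' \<in> Mor C" "Dom C f = X" "Cod C f = X'" "Dom C f' = X'" "Cod C f' = X"
    "cmp C f' f = idm C X" "cmp C f f' = idm C X'" using assms(3) by (rule iso_E)
  obtain g g' where g: "g \<in> Mor C" "g' \<in> Mor C" "Dom C g = Y" "Cod C g = Y'" "Dom C g' = Y'" "Cod C g' = Y"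
    "cmp C g' g = idm C Y" "cmp C g g' = idm C Y'" using assms(4) by (rule iso_E)
  define h where "h = madd C (cmp C j1 (cmp C f p1)) (cmp C j2 (cmp C g p2))"
  define k where "k = madd C (cmp C i1 (cmp C f' q1)) (cmp C i2 (cmp C g' q2))"
  note H = GL[OF a b f(1,3,4) g(1,3,4) h_def]
  note K = GL[OF b a f(2,5,6) g(2,5,6) k_def]
  note fa = bp_facts[OF a] and fb = bp_facts[OF b]
  have 1: "cmp C k h = idm C S"
    apply (rule bp_ext_out[OF a])
    using H K fa fb f g by (simp_all add: lift[OF K(4)] lift[OF K(5)])
  have 2: "cmp C h k = idm C S'"
    apply (rule bp_ext_out[OF b])
    using H K fa fb f g by (simp_all add: lift[OF H(4)] lift[OF H(5)])
  show ?thesis by (rule iso_I(2)[OF H(1) K(1) H(2,3) K(2,3) 1 2])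
qed

lemma bp_swap: "is_biproduct C X Y S i1 i2 p1 p2 \<Longrightarrow> is_biproduct C Y X S i2 i1 p2 p1"
  unfolding is_biproduct_def hom_iff
  by (auto simp: madd_comm)

lemma bp_zero:
  assumes "is_zero_obj C Z" "X \<in> Obj C"
  shows "is_biproduct C X Z X (idm C X) (mzero C Z X) (idm C X) (mzero C X Z)"
proof -
  have Z: "Z \<in> Obj C" using assms zero_obj by auto
  have "cmp C (mzero C X Z) (mzero C Z X) = idm C Z"
    by (rule zero_into[OF assms(1)]) (use Z assms in auto)
  thus ?thesis unfolding is_biproduct_def hom_iff using Z assms by auto
qed

lemma bp_exists:
  assumes "X \<in> Obj C" "Y \<in> Obj C"
  shows "\<exists>S i1 i2 p1 p2. is_biproduct C X Y S i1 i2 p1 p2"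
  using additive assms unfolding is_additive_def by blast

definition bpo :: "'o \<Rightarrow> 'o \<Rightarrow> 'o" where
  "bpo X Y = (SOME S. \<exists>i1 i2 p1 p2. is_biproduct C X Y S i1 i2 p1 p2)"

lemma bpo: "X \<in> Obj C \<Longrightarrow> Y \<in> Obj C \<Longrightarrow> \<exists>i1 i2 p1 p2. is_biproduct C X Y (bpo X Y) i1 i2 p1 p2"
  unfolding bpo_def by (rule someI_ex) (rule bp_exists)

lemma bpo_obj[simp]: "X \<in> Obj C \<Longrightarrow> Y \<in> Obj C \<Longrightarrow> bpo X Y \<in> Obj C"
  using bpo bp_facts(3) by blast

lemma bp_assoc:
  assumes a: "is_biproduct C X Y S a1 a2 b1 b2" and k: "is_biproduct C S Z T k1 k2 q1 q2"
    and j: "is_biproduct C Y Z U j1 j2 r1 r2"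
  shows "is_biproduct C X U T (cmp C k1 a1) (madd C (cmp C k1 (cmp C a2 r1)) (cmp C k2 r2))
           (cmp C b1 q1) (madd C (cmp C j1 (cmp C b2 q1)) (cmp C j2 q2))"
proof -
  note fa = bp_facts[OF a] and fk = bp_facts[OF k] and fj = bp_facts[OF j]
  note ca = bp_comp[OF a] and ck = bp_comp[OF k] and cj = bp_comp[OF j]
  let ?I2 = "madd C (cmp C k1 (cmp C a2 r1)) (cmp C k2 r2)"
  let ?P2 = "madd C (cmp C j1 (cmp C b2 q1)) (cmp C j2 q2)"
  have I2: "?I2 \<in> Mor C" "Dom C ?I2 = U" "Cod C ?I2 = T" using fa fk fj by auto
  have P2: "?P2 \<in> Mor C" "Dom C ?P2 = T" "Cod C ?P2 = U" using fa fk fj by auto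
  have e1: "cmp C (cmp C b1 q1) (cmp C k1 a1) = idm C X" using fa fk fj by (simp add: ca ck cj)
  have e2: "cmp C ?P2 ?I2 = idm C U"
    apply (rule bp_ext_out[OF j])
    using fa fk fj by (simp_all add: ca ck cj lift[OF fa(16)] lift[OF fa(17)] lift[OF fa(18)] lift[OF fa(19)]
        lift[OF fk(16)] lift[OF fk(17)] lift[OF fk(18)] lift[OF fk(19)] lift[OF fj(16)] lift[OF fj(17)] lift[OF fj(18)] lift[OF fj(19)])
  have e3: "cmp C (cmp C b1 q1) ?I2 = mzero C U X" 
    using fa fk fj by (simp add: ca ck cj)
  have e4: "cmp C ?P2 (cmp C k1 a1) = mzero C X U"
    using fa fk fj by (simp add: ca ck cj)
  have e5: "madd C (cmp C (cmp C k1 a1) (cmp C b1 q1)) (cmp C ?I2 ?P2) = idm C T"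
  proof (rule bp_ext_out[OF k])
    show "cmp C (madd C (cmp C (cmp C k1 a1) (cmp C b1 q1)) (cmp C ?I2 ?P2)) k1 = cmp C (idm C T) k1"
      apply (rule bp_ext_out[OF a])
      using fa fk fj by (simp_all add: ca ck cj lift[OF fa(16)] lift[OF fa(17)] lift[OF fa(18)] lift[OF fa(19)]
        lift[OF fk(16)] lift[OF fk(17)] lift[OF fk(18)] lift[OF fk(19)] lift[OF fj(16)] lift[OF fj(17)] lift[OF fj(18)] lift[OF fj(19)])
  qed (use fa fk fj in \<open>simp_all add: ca ck cj lift[OF fa(16)] lift[OF fa(17)] lift[OF fa(18)] lift[OF fa(19)]
        lift[OF fk(16)] lift[OF fk(17)] lift[OF fk(18)] lift[OF fk(19)] lift[OF fj(16)] lift[OF fj(17)] lift[OF fj(18)] lift[OF fj(19)]\<close>)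
  show ?thesis unfolding is_biproduct_def hom_iff
    using fa fk fj I2 P2 e1 e2 e3 e4 e5 by auto
qed

end



context addc
begin

definition Z0 :: 'o where "Z0 = (SOME Z. is_zero_obj C Z)"

lemma Z0: "is_zero_obj C Z0"
  unfolding Z0_def by (rule someI_ex) (use additive in \<open>simp add: is_additive_def\<close>)

lemma Z0_obj[simp]: "Z0 \<in> Obj C" using Z0 zero_obj by blast

fun bs :: "'o list \<Rightarrow> 'o" where
  "bs [] = Z0"
| "bs (x # xs) = bpo x (bs xs)"

lemma bs_obj[simp]: "set xs \<subseteq> Obj C \<Longrightarrow> bs xs \<in> Obj C"
  by (induction xs) auto

lemma bp_bpo: "is_biproduct C X Y D i1 i2 p1 p2 \<Longrightarrow> isomorphic C D (bpo X Y)"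
proof -
  assume b: "is_biproduct C X Y D i1 i2 p1 p2"
  note f = bp_facts[OF b]
  obtain j1 j2 q1 q2 where "is_biproduct C X Y (bpo X Y) j1 j2 q1 q2" using bpo f(1,2) by blast
  thus ?thesis using bp_iso[OF b] iso_refl f(1,2) by blast
qed

lemma bpo_cong: "isomorphic C X X' \<Longrightarrow> isomorphic C Y Y' \<Longrightarrow> isomorphic C (bpo X Y) (bpo X' Y')"
proof -
  assume a: "isomorphic C X X'" "isomorphic C Y Y'"
  obtain j1 j2 q1 q2 where "is_biproduct C X Y (bpo X Y) j1 j2 q1 q2" using bpo iso_obj a by blast
  moreover obtain k1 k2 r1 r2 where "is_biproduct C X' Y' (bpo X' Y') k1 k2 r1 r2" using bpo iso_obj a by blast
  ultimately show ?thesis using bp_iso a by blast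
qed

lemma bpo_swap: "X \<in> Obj C \<Longrightarrow> Y \<in> Obj C \<Longrightarrow> isomorphic C (bpo X Y) (bpo Y X)"
proof -
  assume a: "X \<in> Obj C" "Y \<in> Obj C"
  obtain j1 j2 q1 q2 where "is_biproduct C X Y (bpo X Y) j1 j2 q1 q2" using bpo a by blast
  thus ?thesis using bp_swap bp_bpo by blast
qed

lemma bpo_assoc: assumes "X \<in> Obj C" "Y \<in> Obj C" "Z \<in> Obj C"
  shows "isomorphic C (bpo (bpo X Y) Z) (bpo X (bpo Y Z))"
proof -
  obtain a1 a2 b1 b2 where a: "is_biproduct C X Y (bpo X Y) a1 a2 b1 b2" using bpo assms by blast
  obtain k1 k2 q1 q2 where k: "is_biproduct C (bpo X Y) Z (bpo (bpo X Y) Z) k1 k2 q1 q2"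
    using bpo[of "bpo X Y" Z] assms by auto
  obtain j1 j2 r1 r2 where j: "is_biproduct C Y Z (bpo Y Z) j1 j2 r1 r2" using bpo assms by blast
  show ?thesis by (rule bp_bpo[OF bp_assoc[OF a k j]])
qed

lemma bpo_zero: "X \<in> Obj C \<Longrightarrow> isomorphic C (bpo X Z0) X"
  using bp_bpo[OF bp_zero[OF Z0]] iso_sym by blast

lemma bpo_zero_l: "X \<in> Obj C \<Longrightarrow> isomorphic C (bpo Z0 X) X"
  using bpo_zero bpo_swap iso_trans Z0_obj by blast

lemmas iso_trans' [trans] = iso_trans

lemma bs_swap: assumes "x \<in> Obj C" "y \<in> Obj C" "set l \<subseteq> Obj C"
  shows "isomorphic C (bs (x # y # l)) (bs (y # x # l))"
proof -
  have L: "bs l \<in> Obj C" using assms by simp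
  have "isomorphic C (bpo x (bpo y (bs l))) (bpo (bpo x y) (bs l))"
    using bpo_assoc iso_sym assms L by blast
  also have "isomorphic C \<dots> (bpo (bpo y x) (bs l))"
    using bpo_cong bpo_swap iso_refl assms L by blast
  also have "isomorphic C \<dots> (bpo y (bpo x (bs l)))"
    using bpo_assoc assms L by blast
  finally show ?thesis by simp
qed

lemma bs_cons_cong: "isomorphic C x y \<Longrightarrow> isomorphic C (bs l) (bs l') \<Longrightarrow> isomorphic C (bs (x # l)) (bs (y # l'))"
  by (simp add: bpo_cong)

lemma bs_iso: "list_all2 (isomorphic C) xs ys \<Longrightarrow> isomorphic C (bs xs) (bs ys)"
  by (induction rule: list_all2_induct) (auto intro: bpo_cong iso_refl)

lemma bs_move: "x \<in> Obj C \<Longrightarrow> set l1 \<subseteq> Obj C \<Longrightarrow> set l2 \<subseteq> Obj C \<Longrightarrow>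
  isomorphic C (bs (l1 @ x # l2)) (bs (x # l1 @ l2))"
proof (induction l1)
  case Nil
  then show ?case by (simp add: iso_refl)
next
  case (Cons a l1)
  have "isomorphic C (bs (a # l1 @ x # l2)) (bs (a # x # l1 @ l2))"
    using Cons by (intro bs_cons_cong iso_refl) auto
  also have "isomorphic C \<dots> (bs (x # a # l1 @ l2))"
    using Cons by (intro bs_swap) auto
  finally show ?case by simp
qed

lemma bs_perm: "mset xs = mset ys \<Longrightarrow> set xs \<subseteq> Obj C \<Longrightarrow> isomorphic C (bs xs) (bs ys)"
proof (induction xs arbitrary: ys)
  case Nil
  then show ?case using Nil.prems by (cases ys) (auto simp: iso_refl)
next
  case (Cons x xs)
  have sx: "set (x # xs) = set ys" using Cons.prems(1) by (metis set_mset_mset)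
  have "x \<in> set ys" unfolding sx[symmetric] by simp
  then obtain l1 l2 where ys: "ys = l1 @ x # l2" by (meson split_list)
  have m: "mset xs = mset (l1 @ l2)" using Cons.prems(1) ys by simp
  have so: "set ys \<subseteq> Obj C" using Cons.prems(2) unfolding sx[symmetric] .
  have xo: "x \<in> Obj C" "set xs \<subseteq> Obj C" using Cons.prems(2) by auto
  have "isomorphic C (bs xs) (bs (l1 @ l2))" using Cons.IH[OF m xo(2)] .
  hence "isomorphic C (bs (x # xs)) (bs (x # l1 @ l2))"
    using xo by (intro bs_cons_cong iso_refl)
  also have "isomorphic C \<dots> (bs ys)"
  proof -
    have "set l1 \<subseteq> Obj C" "set l2 \<subseteq> Obj C" using so ys by auto
    hence "isomorphic C (bs (l1 @ x # l2)) (bs (x # l1 @ l2))" using bs_move[of x l1 l2] xo by blast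
    thus ?thesis unfolding ys by (rule iso_sym)
  qed
  finally show ?case .
qed

lemma bs_app: "set xs \<subseteq> Obj C \<Longrightarrow> set ys \<subseteq> Obj C \<Longrightarrow> isomorphic C (bs (xs @ ys)) (bpo (bs xs) (bs ys))"
proof (induction xs)
  case Nil
  then show ?case using bpo_zero_l iso_sym by simp
next
  case (Cons x xs)
  have "isomorphic C (bs (x # xs @ ys)) (bpo x (bpo (bs xs) (bs ys)))"
    using Cons by (simp add: bpo_cong iso_refl)
  also have "isomorphic C \<dots> (bpo (bpo x (bs xs)) (bs ys))"
    using Cons bpo_assoc iso_sym by simp
  finally show ?case by simp
qed

lemma bs_split: "is_biproduct C X Y D i1 i2 p1 p2 \<Longrightarrow> set l \<subseteq> Obj C \<Longrightarrow>
  isomorphic C (bs (D # l)) (bs (X # Y # l))"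
proof -
  assume b: "is_biproduct C X Y D i1 i2 p1 p2" and l: "set l \<subseteq> Obj C"
  note f = bp_facts[OF b]
  have "isomorphic C (bs (D # l)) (bpo (bpo X Y) (bs l))"
    using bp_bpo[OF b] l by (simp add: bpo_cong iso_refl)
  also have "isomorphic C \<dots> (bs (X # Y # l))" using bpo_assoc f l by simp
  finally show ?thesis .
qed

end



locale nang = addc C for C :: "('o, 'm) addcat" +
  fixes n :: nat and SO :: "'o \<Rightarrow> 'o" and SM :: "'m \<Rightarrow> 'm" and N :: "('o, 'm) seq set"
  assumes n3: "n \<ge> 3" and nang: "n_angulated n C SO SM N"
begin

lemma aut: "is_automorphism C SO SM" using nang[unfolded n_angulated_def, THEN conjunct2, THEN conjunct1] .
lemma seqN: "S \<in> N \<Longrightarrow> is_seq n C SO S" using nang[unfolded n_angulated_def, THEN conjunct2, THEN conjunct2, THEN conjunct1] by blast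
lemma dsumN: "is_seq n C SO S \<Longrightarrow> is_seq n C SO X \<Longrightarrow> is_seq n C SO Y \<Longrightarrow> is_seq_dsum n C SO SM S X Y
   \<Longrightarrow> X \<in> N \<Longrightarrow> Y \<in> N \<Longrightarrow> S \<in> N"
  using nang[unfolded n_angulated_def, THEN conjunct2, THEN conjunct2, THEN conjunct2, THEN conjunct1] by blast
lemma isoN: "S \<in> N \<Longrightarrow> seq_iso n C SO SM S T \<phi> \<Longrightarrow> T \<in> N"
  using nang[unfolded n_angulated_def, THEN conjunct2, THEN conjunct2, THEN conjunct2, THEN conjunct2, THEN conjunct1] by blast
lemma trivN: "A \<in> Obj C \<Longrightarrow> is_zero_obj C Z \<Longrightarrow> trivial_seq n C SO A Z \<in> N"
  using nang[unfolded n_angulated_def, THEN conjunct2, THEN conjunct2, THEN conjunct2, THEN conjunct2, THEN conjunct2, THEN conjunct1] by blast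
lemma rotN: "is_seq n C SO S \<Longrightarrow> left_rot n C SO SM S \<in> N \<Longrightarrow> S \<in> N"
  using nang[unfolded n_angulated_def, THEN conjunct2, THEN conjunct2, THEN conjunct2, THEN conjunct2, THEN conjunct2, THEN conjunct2, THEN conjunct2, THEN conjunct1] by blast

lemma SO_obj[simp]: "A \<in> Obj C \<Longrightarrow> SO A \<in> Obj C"
  using aut unfolding is_automorphism_def bij_betw_def by blast

lemma SO_inj: "A \<in> Obj C \<Longrightarrow> B \<in> Obj C \<Longrightarrow> SO A = SO B \<Longrightarrow> A = B"
  using aut unfolding is_automorphism_def bij_betw_def inj_on_def by blast

lemma SM_mor[simp]: "f \<in> Mor C \<Longrightarrow> SM f \<in> Mor C"
  using aut unfolding is_automorphism_def bij_betw_def by blast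

lemma SM_dom[simp]: "f \<in> Mor C \<Longrightarrow> Dom C (SM f) = SO (Dom C f)"
  and SM_cod[simp]: "f \<in> Mor C \<Longrightarrow> Cod C (SM f) = SO (Cod C f)"
  using aut unfolding is_automorphism_def by blast+

lemma SM_idm[simp]: "A \<in> Obj C \<Longrightarrow> SM (idm C A) = idm C (SO A)"
  using aut unfolding is_automorphism_def by blast

lemma SM_cmp[simp]: "f \<in> Mor C \<Longrightarrow> g \<in> Mor C \<Longrightarrow> Cod C f = Dom C g \<Longrightarrow> SM (cmp C g f) = cmp C (SM g) (SM f)"
proof -
  assume a: "f \<in> Mor C" "g \<in> Mor C" "Cod C f = Dom C g"
  have h: "f \<in> hom C (Dom C f) (Cod C f)" "g \<in> hom C (Cod C f) (Cod C g)" using a by (auto simp: hom_iff)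
  have "\<forall>A \<in> Obj C. \<forall>B \<in> Obj C. \<forall>D \<in> Obj C. \<forall>f \<in> hom C A B. \<forall>g \<in> hom C B D.
        SM (cmp C g f) = cmp C (SM g) (SM f)" using aut unfolding is_automorphism_def by blast
  from this[rule_format, OF mor_dom[OF a(1)] mor_cod[OF a(1)] mor_cod[OF a(2)] h(1) h(2)]
  show ?thesis .
qed

lemma SM_madd[simp]: "f \<in> Mor C \<Longrightarrow> g \<in> Mor C \<Longrightarrow> Dom C f = Dom C g \<Longrightarrow> Cod C f = Cod C g \<Longrightarrow> SM (madd C f g) = madd C (SM f) (SM g)"
proof -
  assume a: "f \<in> Mor C" "g \<in> Mor C" "Dom C f = Dom C g" "Cod C f = Cod C g"
  have h: "f \<in> hom C (Dom C f) (Cod C f)" "g \<in> hom C (Dom C f) (Cod C f)" using a by (auto simp: hom_iff)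
  have "\<forall>A \<in> Obj C. \<forall>B \<in> Obj C. \<forall>f \<in> hom C A B. \<forall>g \<in> hom C A B.
        SM (madd C f g) = madd C (SM f) (SM g)" using aut unfolding is_automorphism_def by blast
  from this[rule_format, OF mor_dom[OF a(1)] mor_cod[OF a(1)] h(1) h(2)]
  show ?thesis .
qed

lemma SM_zero[simp]: "A \<in> Obj C \<Longrightarrow> B \<in> Obj C \<Longrightarrow> SM (mzero C A B) = mzero C (SO A) (SO B)"
proof -
  assume a: "A \<in> Obj C" "B \<in> Obj C"
  let ?x = "SM (mzero C A B)"
  have "madd C ?x ?x = SM (madd C (mzero C A B) (mzero C A B))" using a by (subst SM_madd) auto
  also have "\<dots> = ?x" using a by simp
  finally have "?x = mzero C (Dom C ?x) (Cod C ?x)" using a by (intro cancel_self) auto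
  thus ?thesis using a by simp
qed

lemma SM_surj: "g \<in> Mor C \<Longrightarrow> \<exists>f \<in> Mor C. g = SM f"
  using aut unfolding is_automorphism_def bij_betw_def by blast

lemma SO_zero: assumes "is_zero_obj C Z" shows "is_zero_obj C (SO Z)"
proof -
  have Z: "Z \<in> Obj C" using assms zero_obj by blast
  have u: "f = g" if th: "f \<in> hom C (SO Z) A" "g \<in> hom C (SO Z) A" for f g A
  proof -
    obtain f' where f': "f' \<in> Mor C" "f = SM f'" using SM_surj th by (auto simp: hom_iff)
    obtain g' where g': "g' \<in> Mor C" "g = SM g'" using SM_surj th by (auto simp: hom_iff)
    have "Dom C f' = Z" "Dom C g' = Z" using th f' g' Z SO_inj[of "Dom C f'" Z] SO_inj[of "Dom C g'" Z] by (auto simp: hom_iff)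
    moreover have "Cod C f' = Cod C g'" using th f' g' SO_inj[of "Cod C f'" "Cod C g'"] by (auto simp: hom_iff)
    ultimately have "f' = g'" using zero_from[OF assms f'(1) g'(1)] by simp
    thus ?thesis using f' g' by simp
  qed
  have v: "f = g" if th: "f \<in> hom C A (SO Z)" "g \<in> hom C A (SO Z)" for f g A
  proof -
    obtain f' where f': "f' \<in> Mor C" "f = SM f'" using SM_surj th by (auto simp: hom_iff)
    obtain g' where g': "g' \<in> Mor C" "g = SM g'" using SM_surj th by (auto simp: hom_iff)
    have "Cod C f' = Z" "Cod C g' = Z" using th f' g' Z SO_inj[of "Cod C f'" Z] SO_inj[of "Cod C g'" Z] by (auto simp: hom_iff)
    moreover have "Dom C f' = Dom C g'" using th f' g' SO_inj[of "Dom C f'" "Dom C g'"] by (auto simp: hom_iff)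
    ultimately have "f' = g'" using zero_into[OF assms f'(1) g'(1)] by simp
    thus ?thesis using f' g' by simp
  qed
  show ?thesis unfolding is_zero_obj_def
  proof (intro conjI ballI)
    show "SO Z \<in> Obj C" using Z by simp
    fix A assume A: "A \<in> Obj C"
    show "\<exists>!f. f \<in> hom C (SO Z) A" using u mzero_hom[of "SO Z" A] A Z by auto
    show "\<exists>!f. f \<in> hom C A (SO Z)" using v mzero_hom[of A "SO Z"] A Z by auto
  qed
qed

lemma bp_SM: assumes "is_biproduct C X Y D i1 i2 p1 p2"
  shows "is_biproduct C (SO X) (SO Y) (SO D) (SM i1) (SM i2) (SM p1) (SM p2)"
proof -
  note f = bp_facts[OF assms]
  have e: "SM (madd C (cmp C i1 p1) (cmp C i2 p2)) = madd C (SM (cmp C i1 p1)) (SM (cmp C i2 p2))"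
    by (rule SM_madd) (use f in auto)
  have "madd C (cmp C (SM i1) (SM p1)) (cmp C (SM i2) (SM p2)) = idm C (SO D)"
    using e f by simp
  moreover have "cmp C (SM p1) (SM i1) = idm C (SO X)"
    using SM_cmp[of i1 p1, symmetric] f by simp
  moreover have "cmp C (SM p2) (SM i2) = idm C (SO Y)"
    using SM_cmp[of i2 p2, symmetric] f by simp
  moreover have "cmp C (SM p1) (SM i2) = mzero C (SO Y) (SO X)"
    using SM_cmp[of i2 p1, symmetric] f by simp
  moreover have "cmp C (SM p2) (SM i1) = mzero C (SO X) (SO Y)"
    using SM_cmp[of i1 p2, symmetric] f by simp
  ultimately show ?thesis using f unfolding is_biproduct_def hom_iff by simp
qed

end



context nang
begin

lemma is_seqD:
  assumes "is_seq n C SO S"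
  shows "\<And>i. 1 \<le> i \<Longrightarrow> i \<le> n \<Longrightarrow> fst S i \<in> Obj C"
    "\<And>i. 1 \<le> i \<Longrightarrow> i < n \<Longrightarrow> snd S i \<in> Mor C \<and> Dom C (snd S i) = fst S i \<and> Cod C (snd S i) = fst S (Suc i)"
    "snd S n \<in> Mor C" "Dom C (snd S n) = fst S n" "Cod C (snd S n) = SO (fst S 1)"
  using assms unfolding is_seq_def hom_iff by auto

lemma is_seqI:
  assumes "\<And>i. 1 \<le> i \<Longrightarrow> i \<le> n \<Longrightarrow> fst S i \<in> Obj C"
    "\<And>i. 1 \<le> i \<Longrightarrow> i < n \<Longrightarrow> snd S i \<in> Mor C \<and> Dom C (snd S i) = fst S i \<and> Cod C (snd S i) = fst S (Suc i)"
    "snd S n \<in> Mor C" "Dom C (snd S n) = fst S n" "Cod C (snd S n) = SO (fst S 1)"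
  shows "is_seq n C SO S"
  using assms unfolding is_seq_def hom_iff by auto

lemma seq_isoI:
  assumes "is_seq n C SO S" "is_seq n C SO T"
    "\<And>i. 1 \<le> i \<Longrightarrow> i \<le> n \<Longrightarrow> \<phi> i \<in> Mor C \<and> Dom C (\<phi> i) = fst S i \<and> Cod C (\<phi> i) = fst T i \<and> is_iso C (\<phi> i)"
    "\<And>i. 1 \<le> i \<Longrightarrow> i < n \<Longrightarrow> cmp C (snd T i) (\<phi> i) = cmp C (\<phi> (Suc i)) (snd S i)"
    "cmp C (snd T n) (\<phi> n) = cmp C (SM (\<phi> 1)) (snd S n)"
  shows "seq_iso n C SO SM S T \<phi>"
  using assms unfolding seq_iso_def seq_mor_def hom_iff by auto

lemma n1: "1 < n" "1 \<le> n" "2 < n" using n3 by auto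

lemma seq_eqN:
  assumes S: "S \<in> N" and T: "is_seq n C SO T"
    and eq: "\<And>i. 1 \<le> i \<Longrightarrow> i \<le> n \<Longrightarrow> fst T i = fst S i \<and> snd T i = snd S i"
  shows "T \<in> N"
proof -
  have sS: "is_seq n C SO S" using seqN S by blast
  note d = is_seqD[OF sS]
  have "seq_iso n C SO SM S T (\<lambda>i. idm C (fst S i))"
  proof (rule seq_isoI[OF sS T])
    fix i assume "1 \<le> i" "i \<le> n"
    thus "idm C (fst S i) \<in> Mor C \<and> Dom C (idm C (fst S i)) = fst S i \<and> Cod C (idm C (fst S i)) = fst T i \<and> is_iso C (idm C (fst S i))"
      using d eq by (auto intro!: iso_I(1)[of _ "idm C (fst S i)"])
  next
    fix i assume i: "1 \<le> i" "i < n"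
    show "cmp C (snd T i) (idm C (fst S i)) = cmp C (idm C (fst S (Suc i))) (snd S i)"
      using d(2)[OF i] eq[of i] i by simp
  next
    show "cmp C (snd T n) (idm C (fst S n)) = cmp C (SM (idm C (fst S 1))) (snd S n)"
      using d(3-5) d(1)[of 1] eq[of n] n1 by simp
  qed
  thus ?thesis using isoN S by blast
qed

lemma rot_seq: assumes "is_seq n C SO S" shows "is_seq n C SO (left_rot n C SO SM S)"
proof -
  note d = is_seqD[OF assms]
  show ?thesis
  proof (rule is_seqI)
    fix i assume "1 \<le> i" "i \<le> n" thus "fst (left_rot n C SO SM S) i \<in> Obj C"
      using d(1)[of 1] d(1)[of "Suc i"] n1 by (auto simp: left_rot_def)
  next
    fix i assume i: "1 \<le> i" "i < n"
    show "snd (left_rot n C SO SM S) i \<in> Mor C \<and> Dom C (snd (left_rot n C SO SM S) i) = fst (left_rot n C SO SM S) i \<and>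
          Cod C (snd (left_rot n C SO SM S) i) = fst (left_rot n C SO SM S) (Suc i)"
    proof (cases "Suc i < n")
      case True thus ?thesis using d(2)[of "Suc i"] i by (simp add: left_rot_def)
    next
      case False hence "Suc i = n" using i by simp
      thus ?thesis using d(3-5) i by (auto simp: left_rot_def)
    qed
  next
    have s2: "Suc 1 = 2" by simp
    have eq2: "Suc (Suc 0) = 2" by simp
    have "snd S 1 \<in> Mor C" "Dom C (snd S 1) = fst S 1" "Cod C (snd S 1) = fst S 2" using d(2)[of 1] n1 unfolding s2 by auto
    thus "snd (left_rot n C SO SM S) n \<in> Mor C" "Dom C (snd (left_rot n C SO SM S) n) = fst (left_rot n C SO SM S) n"
      "Cod C (snd (left_rot n C SO SM S) n) = SO (fst (left_rot n C SO SM S) 1)"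
      using n1 by (auto simp: left_rot_def eq2)
  qed
qed

definition tobj :: "nat \<Rightarrow> 'o \<Rightarrow> nat \<Rightarrow> 'o" where
  "tobj j B i = (if i = j \<or> i = Suc j then B else Z0)"

definition T :: "nat \<Rightarrow> 'o \<Rightarrow> ('o, 'm) seq" where
  "T j B = (tobj j B, \<lambda>i. if i < n then (if i = j then idm C B else mzero C (tobj j B i) (tobj j B (Suc i)))
                       else mzero C (tobj j B n) (SO (tobj j B 1)))"

lemma fst_T[simp]: "fst (T j B) = tobj j B" by (simp add: T_def)

lemma tobj_obj[simp]: "B \<in> Obj C \<Longrightarrow> tobj j B i \<in> Obj C" by (simp add: tobj_def)

lemma T_seq: assumes "B \<in> Obj C" shows "is_seq n C SO (T j B)"
  by (rule is_seqI) (use assms in \<open>auto simp: T_def tobj_def\<close>)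

lemma T1N: assumes B: "B \<in> Obj C" shows "T 1 B \<in> N"
proof (rule seq_eqN[OF trivN[OF B Z0] T_seq[OF B]])
  fix i assume "1 \<le> i" "i \<le> n"
  thus "fst (T 1 B) i = fst (trivial_seq n C SO B Z0) i \<and> snd (T 1 B) i = snd (trivial_seq n C SO B Z0) i"
    using n1 by (auto simp: T_def tobj_def trivial_seq_def)
qed

lemma zero_iso: "is_zero_obj C Z \<Longrightarrow> is_zero_obj C Z' \<Longrightarrow> is_iso C (mzero C Z Z')"
  by (rule iso_I(1)[of _ "mzero C Z' Z"]) (auto simp: zero_obj intro: zero_into zero_from)

lemma TN: assumes B: "B \<in> Obj C" shows "1 \<le> j \<Longrightarrow> j < n \<Longrightarrow> T j B \<in> N"
proof (induction j rule: nat_induct_at_least)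
  case base
  show ?case by (rule T1N[OF B])
next
  case (Suc k)
  let ?j = "Suc k"
  let ?R = "left_rot n C SO SM (T ?j B)"
  have ZS: "is_zero_obj C (SO Z0)" using SO_zero[OF Z0] .
  have ZSo: "SO Z0 \<in> Obj C" by simp
  have IH: "T k B \<in> N" using Suc by simp
  have fR: "fst ?R i = (if i < n then tobj k B i else SO Z0)" for i
    using Suc by (auto simp: left_rot_def T_def tobj_def)
  define \<phi> where "\<phi> i = (if i < n then idm C (tobj k B i) else mzero C Z0 (SO Z0))" for i
  have tkn: "tobj k B n = Z0" "tobj ?j B 1 = Z0" using Suc by (auto simp: tobj_def)
  have "seq_iso n C SO SM (T k B) ?R \<phi>"
  proof (rule seq_isoI[OF T_seq[OF B] rot_seq[OF T_seq[OF B]]])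
    fix i assume i: "1 \<le> i" "i \<le> n"
    show "\<phi> i \<in> Mor C \<and> Dom C (\<phi> i) = fst (T k B) i \<and> Cod C (\<phi> i) = fst ?R i \<and> is_iso C (\<phi> i)"
    proof (cases "i < n")
      case True thus ?thesis using B by (auto simp: \<phi>_def fR intro!: iso_I(1)[of _ "idm C (tobj k B i)"])
    next
      case False hence "i = n" using i by simp
      thus ?thesis using zero_iso[OF Z0 ZS] tkn by (simp add: \<phi>_def fR)
    qed
  next
    fix i assume i: "1 \<le> i" "i < n"
    show "cmp C (snd ?R i) (\<phi> i) = cmp C (\<phi> (Suc i)) (snd (T k B) i)"
    proof (cases "Suc i < n")
      case True
      hence "snd ?R i = snd (T k B) i" using i by (auto simp: left_rot_def T_def tobj_def)
      thus ?thesis using True i B by (simp add: \<phi>_def T_def tobj_def)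
    next
      case False hence n: "Suc i = n" using i by simp
      show ?thesis
        by (rule zero_into[OF ZS]) (use n i B tkn Suc in \<open>auto simp: \<phi>_def T_def left_rot_def tobj_def\<close>)
    qed
  next
    show "cmp C (snd ?R n) (\<phi> n) = cmp C (SM (\<phi> 1)) (snd (T k B) n)"
      by (rule zero_from[OF Z0]) (use n1 B tkn Suc in \<open>auto simp: \<phi>_def T_def left_rot_def tobj_def\<close>)
  qed
  hence "?R \<in> N" using isoN IH by blast
  thus ?case using rotN T_seq[OF B] by blast
qed

end



context nang
begin

lemma seq_morI:
  assumes "is_seq n C SO S" "is_seq n C SO R"
    "\<And>i. 1 \<le> i \<Longrightarrow> i \<le> n \<Longrightarrow> \<phi> i \<in> Mor C \<and> Dom C (\<phi> i) = fst S i \<and> Cod C (\<phi> i) = fst R i"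
    "\<And>i. 1 \<le> i \<Longrightarrow> i < n \<Longrightarrow> cmp C (snd R i) (\<phi> i) = cmp C (\<phi> (Suc i)) (snd S i)"
    "cmp C (snd R n) (\<phi> n) = cmp C (SM (\<phi> 1)) (snd S n)"
  shows "seq_mor n C SO SM S R \<phi>"
  using assms unfolding seq_mor_def hom_iff by auto

lemma DSUM:
  assumes XN: "X \<in> N" and YN: "Y \<in> N"
  shows "\<exists>S\<in>N. \<forall>i\<in>{1..n}. \<exists>i1 i2 p1 p2. is_biproduct C (fst X i) (fst Y i) (fst S i) i1 i2 p1 p2"
proof -
  have sX: "is_seq n C SO X" and sY: "is_seq n C SO Y" using XN YN seqN by auto
  note dX = is_seqD[OF sX] and dY = is_seqD[OF sY]
  define D where "D i = bpo (fst X i) (fst Y i)" for i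
  have "\<forall>i\<in>{1..n}. \<exists>q. is_biproduct C (fst X i) (fst Y i) (D i) (fst q) (fst (snd q)) (fst (snd (snd q))) (snd (snd (snd q)))"
  proof
    fix i assume "i \<in> {1..n}"
    hence "fst X i \<in> Obj C" "fst Y i \<in> Obj C" using dX dY by auto
    then obtain a b c d where "is_biproduct C (fst X i) (fst Y i) (D i) a b c d" unfolding D_def using bpo by blast
    thus "\<exists>q. is_biproduct C (fst X i) (fst Y i) (D i) (fst q) (fst (snd q)) (fst (snd (snd q))) (snd (snd (snd q)))"
      by (intro exI[of _ "(a,b,c,d)"]) simp
  qed
  from bchoice[OF this] obtain q where q: "\<forall>i\<in>{1..n}. is_biproduct C (fst X i) (fst Y i) (D i) (fst (q i)) (fst (snd (q i))) (fst (snd (snd (q i)))) (snd (snd (snd (q i))))"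
    by blast
  define I1 where "I1 i = fst (q i)" for i
  define I2 where "I2 i = fst (snd (q i))" for i
  define P1 where "P1 i = fst (snd (snd (q i)))" for i
  define P2 where "P2 i = snd (snd (snd (q i)))" for i
  have bp: "\<And>i. 1 \<le> i \<Longrightarrow> i \<le> n \<Longrightarrow> is_biproduct C (fst X i) (fst Y i) (D i) (I1 i) (I2 i) (P1 i) (P2 i)"
    using q unfolding I1_def I2_def P1_def P2_def by auto
  define Xn where "Xn i = (if i < n then fst X (Suc i) else SO (fst X 1))" for i
  define Yn where "Yn i = (if i < n then fst Y (Suc i) else SO (fst Y 1))" for i
  define Dn where "Dn i = (if i < n then D (Suc i) else SO (D 1))" for i
  define e1 where "e1 i = (if i < n then I1 (Suc i) else SM (I1 1))" for i
  define e2 where "e2 i = (if i < n then I2 (Suc i) else SM (I2 1))" for i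
  define f1 where "f1 i = (if i < n then P1 (Suc i) else SM (P1 1))" for i
  define f2 where "f2 i = (if i < n then P2 (Suc i) else SM (P2 1))" for i
  have bpn: "is_biproduct C (Xn i) (Yn i) (Dn i) (e1 i) (e2 i) (f1 i) (f2 i)" if "1 \<le> i" "i \<le> n" for i
  proof (cases "i < n")
    case True thus ?thesis using bp[of "Suc i"] unfolding Xn_def Yn_def Dn_def e1_def e2_def f1_def f2_def by simp
  next
    case False thus ?thesis using bp_SM[OF bp[of 1]] n1 unfolding Xn_def Yn_def Dn_def e1_def e2_def f1_def f2_def by simp
  qed
  have mX: "snd X i \<in> Mor C \<and> Dom C (snd X i) = fst X i \<and> Cod C (snd X i) = Xn i" if "1 \<le> i" "i \<le> n" for i
    using that dX(2)[of i] dX(3-5) unfolding Xn_def by (cases "i < n") auto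
  have mY: "snd Y i \<in> Mor C \<and> Dom C (snd Y i) = fst Y i \<and> Cod C (snd Y i) = Yn i" if "1 \<le> i" "i \<le> n" for i
    using that dY(2)[of i] dY(3-5) unfolding Yn_def by (cases "i < n") auto
  define s where "s i = madd C (cmp C (e1 i) (cmp C (snd X i) (P1 i))) (cmp C (e2 i) (cmp C (snd Y i) (P2 i)))" for i
  have G: "s i \<in> Mor C \<and> Dom C (s i) = D i \<and> Cod C (s i) = Dn i \<and>
    cmp C (s i) (I1 i) = cmp C (e1 i) (snd X i) \<and> cmp C (s i) (I2 i) = cmp C (e2 i) (snd Y i) \<and>
    cmp C (f1 i) (s i) = cmp C (snd X i) (P1 i) \<and> cmp C (f2 i) (s i) = cmp C (snd Y i) (P2 i)"
    if "1 \<le> i" "i \<le> n" for i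
  proof -
    have x: "snd X i \<in> Mor C" "Dom C (snd X i) = fst X i" "Cod C (snd X i) = Xn i" using mX[OF that] by auto
    have y: "snd Y i \<in> Mor C" "Dom C (snd Y i) = fst Y i" "Cod C (snd Y i) = Yn i" using mY[OF that] by auto
    note g = GL[OF bp[OF that] bpn[OF that] x y s_def]
    show ?thesis using g by simp
  qed
  define S where "S = (D, s)"
  have sS: "is_seq n C SO S"
  proof (rule is_seqI)
    fix i assume "1 \<le> i" "i \<le> n" thus "fst S i \<in> Obj C" using bp_facts(3)[OF bp] S_def by auto
  next
    fix i assume "1 \<le> i" "i < n" thus "snd S i \<in> Mor C \<and> Dom C (snd S i) = fst S i \<and> Cod C (snd S i) = fst S (Suc i)"
      using G[of i] by (simp add: S_def Dn_def)
  next
    show "snd S n \<in> Mor C" "Dom C (snd S n) = fst S n" "Cod C (snd S n) = SO (fst S 1)"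
      using G[of n] n1 by (simp_all add: S_def Dn_def)
  qed
  have ds: "is_seq_dsum n C SO SM S X Y"
    unfolding is_seq_dsum_def
  proof (intro exI conjI ballI)
    show "seq_mor n C SO SM X S I1"
    proof (rule seq_morI[OF sX sS])
      fix i assume "1 \<le> i" "i \<le> n" thus "I1 i \<in> Mor C \<and> Dom C (I1 i) = fst X i \<and> Cod C (I1 i) = fst S i"
        using bp_facts[OF bp] by (simp add: S_def)
    next
      fix i assume "1 \<le> i" "i < n" thus "cmp C (snd S i) (I1 i) = cmp C (I1 (Suc i)) (snd X i)"
        using G[of i] by (simp add: S_def e1_def)
    next
      show "cmp C (snd S n) (I1 n) = cmp C (SM (I1 1)) (snd X n)" using G[of n] n1 by (simp add: S_def e1_def)
    qed
    show "seq_mor n C SO SM Y S I2"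
    proof (rule seq_morI[OF sY sS])
      fix i assume "1 \<le> i" "i \<le> n" thus "I2 i \<in> Mor C \<and> Dom C (I2 i) = fst Y i \<and> Cod C (I2 i) = fst S i"
        using bp_facts[OF bp] by (simp add: S_def)
    next
      fix i assume "1 \<le> i" "i < n" thus "cmp C (snd S i) (I2 i) = cmp C (I2 (Suc i)) (snd Y i)"
        using G[of i] by (simp add: S_def e2_def)
    next
      show "cmp C (snd S n) (I2 n) = cmp C (SM (I2 1)) (snd Y n)" using G[of n] n1 by (simp add: S_def e2_def)
    qed
    show "seq_mor n C SO SM S X P1"
    proof (rule seq_morI[OF sS sX])
      fix i assume "1 \<le> i" "i \<le> n" thus "P1 i \<in> Mor C \<and> Dom C (P1 i) = fst S i \<and> Cod C (P1 i) = fst X i"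
        using bp_facts[OF bp] by (simp add: S_def)
    next
      fix i assume "1 \<le> i" "i < n" thus "cmp C (snd X i) (P1 i) = cmp C (P1 (Suc i)) (snd S i)"
        using G[of i] by (simp add: S_def f1_def)
    next
      show "cmp C (snd X n) (P1 n) = cmp C (SM (P1 1)) (snd S n)" using G[of n] n1 by (simp add: S_def f1_def)
    qed
    show "seq_mor n C SO SM S Y P2"
    proof (rule seq_morI[OF sS sY])
      fix i assume "1 \<le> i" "i \<le> n" thus "P2 i \<in> Mor C \<and> Dom C (P2 i) = fst S i \<and> Cod C (P2 i) = fst Y i"
        using bp_facts[OF bp] by (simp add: S_def)
    next
      fix i assume "1 \<le> i" "i < n" thus "cmp C (snd Y i) (P2 i) = cmp C (P2 (Suc i)) (snd S i)"
        using G[of i] by (simp add: S_def f2_def)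
    next
      show "cmp C (snd Y n) (P2 n) = cmp C (SM (P2 1)) (snd S n)" using G[of n] n1 by (simp add: S_def f2_def)
    qed
    fix i assume "i \<in> {1..n}"
    thus "is_biproduct C (fst X i) (fst Y i) (fst S i) (I1 i) (I2 i) (P1 i) (P2 i)" using bp by (simp add: S_def)
  qed
  have "S \<in> N" by (rule dsumN[OF sS sX sY ds XN YN])
  moreover have "\<forall>i\<in>{1..n}. \<exists>i1 i2 p1 p2. is_biproduct C (fst X i) (fst Y i) (fst S i) i1 i2 p1 p2"
    using bp unfolding S_def by (metis atLeastAtMost_iff fst_conv)
  ultimately show ?thesis by blast
qed

end



locale thm_ctx = nang C n SO SM N for C :: "('o, 'm) addcat" and n SO SM N +
  fixes A :: "'o set" and NA :: "('o, 'm) seq set"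
  assumes oddn: "odd n" and sub: "n_angulated_subcat n C SO SM N A NA"
    and compl: "complete_subcat n N A" and dense: "dense_subcat C A"
begin

lemma A_sub: "A \<subseteq> Obj C" using sub unfolding n_angulated_subcat_def by blast

lemma A_iso: "X \<in> A \<Longrightarrow> isomorphic C X Y \<Longrightarrow> Y \<in> A"
  using sub iso_obj unfolding n_angulated_subcat_def by blast

lemma complD: "S \<in> N \<Longrightarrow> 1 \<le> k \<Longrightarrow> k \<le> n \<Longrightarrow> (\<And>i. 1 \<le> i \<Longrightarrow> i \<le> n \<Longrightarrow> i \<noteq> k \<Longrightarrow> fst S i \<in> A) \<Longrightarrow> fst S k \<in> A"
  using compl unfolding complete_subcat_def by auto

lemma denseD: "X \<in> Obj C \<Longrightarrow> \<exists>D\<in>A. \<exists>B i1 i2 p1 p2. is_biproduct C X B D i1 i2 p1 p2"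
  using dense unfolding dense_subcat_def by blast

lemma hom_sub: "X \<in> A \<Longrightarrow> Y \<in> A \<Longrightarrow> hom (full_subcat C A) X Y = hom C X Y"
  by (auto simp: full_subcat_def hom_def)

lemma Z0_A: "Z0 \<in> A"
proof -
  have "n_angulated n (full_subcat C A) SO SM NA" using sub unfolding n_angulated_subcat_def by blast
  hence "is_additive (full_subcat C A)" unfolding n_angulated_def by blast
  then obtain Z where Z: "is_zero_obj (full_subcat C A) Z" unfolding is_additive_def by blast
  have ZA: "Z \<in> A" using Z unfolding is_zero_obj_def full_subcat_def by simp
  have ZO: "Z \<in> Obj C" using ZA A_sub by blast
  have uniq: "f = g" if "f \<in> hom C Z Z" "g \<in> hom C Z Z" for f g
    using Z ZA that hom_sub[OF ZA ZA] unfolding is_zero_obj_def full_subcat_def by auto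
  have "cmp C (mzero C Z0 Z) (mzero C Z Z0) = idm C Z"
    by (rule uniq) (use ZO in \<open>auto simp: hom_iff\<close>)
  moreover have "cmp C (mzero C Z Z0) (mzero C Z0 Z) = idm C Z0"
    by (rule zero_into[OF Z0]) (use ZO in auto)
  ultimately have "isomorphic C Z Z0"
    by (intro iso_I(2)[of "mzero C Z Z0" "mzero C Z0 Z"]) (use ZO in auto)
  thus ?thesis using A_iso ZA by blast
qed

lemma isoA: "isomorphic C Y X \<Longrightarrow> X \<in> A \<Longrightarrow> Y \<in> A"
  using A_iso iso_sym by blast

lemma SPLIT:
  assumes X: "X \<in> Obj C" and Y: "Y \<in> Obj C"
  shows "\<exists>S\<in>N. isomorphic C (fst S 1) X \<and> isomorphic C (fst S 2) (bpo X Y) \<and> isomorphic C (fst S 3) Y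
     \<and> (\<forall>i. 4 \<le> i \<longrightarrow> i \<le> n \<longrightarrow> isomorphic C (fst S i) Z0)"
proof -
  obtain S where S: "S \<in> N" and b: "\<forall>i\<in>{1..n}. \<exists>i1 i2 p1 p2. is_biproduct C (fst (T 1 X) i) (fst (T 2 Y) i) (fst S i) i1 i2 p1 p2"
    using DSUM[OF TN[OF X, of 1] TN[OF Y, of 2]] n1 by auto
  have bb: "\<And>i. 1 \<le> i \<Longrightarrow> i \<le> n \<Longrightarrow> isomorphic C (fst S i) (bpo (tobj 1 X i) (tobj 2 Y i))"
    using b bp_bpo by fastforce
  have "isomorphic C (fst S 1) X" using bb[of 1] n1 bpo_zero[OF X] iso_trans by (simp add: tobj_def)
  moreover have "isomorphic C (fst S 2) (bpo X Y)" using bb[of 2] n1 by (simp add: tobj_def)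
  moreover have "isomorphic C (fst S 3) Y" using bb[of 3] n1 bpo_zero_l[OF Y] iso_trans by (simp add: tobj_def)
  moreover have "isomorphic C (fst S i) Z0" if "4 \<le> i" "i \<le> n" for i
    using bb[of i] that bpo_zero[OF Z0_obj] iso_trans by (simp add: tobj_def)
  ultimately show ?thesis using S by blast
qed

lemma A_sum: assumes "X \<in> A" "Y \<in> A" shows "bpo X Y \<in> A"
proof -
  have X: "X \<in> Obj C" and Y: "Y \<in> Obj C" using assms A_sub by auto
  obtain S where S: "S \<in> N" "isomorphic C (fst S 1) X" "isomorphic C (fst S 2) (bpo X Y)" "isomorphic C (fst S 3) Y"
     "\<forall>i. 4 \<le> i \<longrightarrow> i \<le> n \<longrightarrow> isomorphic C (fst S i) Z0" using SPLIT[OF X Y] by blast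
  have "fst S 2 \<in> A"
  proof (rule complD[OF S(1)])
    fix i assume i: "1 \<le> i" "i \<le> n" "i \<noteq> 2"
    show "fst S i \<in> A"
    proof -
      consider "i = 1" | "i = 3" | "4 \<le> i" using i by linarith
      thus ?thesis using S assms Z0_A isoA i by cases auto
    qed
  qed (use n1 in auto)
  thus ?thesis using A_iso S(3) by blast
qed

lemma A_cancel: assumes "bpo X Y \<in> A" "Y \<in> A" "X \<in> Obj C" shows "X \<in> A"
proof -
  have X: "X \<in> Obj C" and Y: "Y \<in> Obj C" using assms A_sub by auto
  obtain S where S: "S \<in> N" "isomorphic C (fst S 1) X" "isomorphic C (fst S 2) (bpo X Y)" "isomorphic C (fst S 3) Y"
     "\<forall>i. 4 \<le> i \<longrightarrow> i \<le> n \<longrightarrow> isomorphic C (fst S i) Z0" using SPLIT[OF X Y] by blast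
  have "fst S 1 \<in> A"
  proof (rule complD[OF S(1)])
    fix i assume i: "1 \<le> i" "i \<le> n" "i \<noteq> 1"
    show "fst S i \<in> A"
    proof -
      consider "i = 2" | "i = 3" | "4 \<le> i" using i by linarith
      thus ?thesis using S assms Z0_A isoA i by cases auto
    qed
  qed (use n1 in auto)
  thus ?thesis using A_iso S(2) by blast
qed

definition LA :: "'o list \<Rightarrow> bool" where
  "LA xs \<longleftrightarrow> set xs \<subseteq> Obj C \<and> bs xs \<in> A"

lemma L_perm: "mset xs = mset ys \<Longrightarrow> LA xs \<longleftrightarrow> LA ys"
proof -
  assume m: "mset xs = mset ys"
  have s: "set xs = set ys" using m by (metis set_mset_mset)
  show ?thesis unfolding LA_def using bs_perm[OF m] bs_perm[OF m[symmetric]] s A_iso by auto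
qed

lemma L_iso: "list_all2 (isomorphic C) xs ys \<Longrightarrow> LA xs \<longleftrightarrow> LA ys"
proof -
  assume l: "list_all2 (isomorphic C) xs ys"
  have "set xs \<subseteq> Obj C \<and> set ys \<subseteq> Obj C" using l
    by (induction rule: list_all2_induct) (use iso_obj in auto)
  moreover have "isomorphic C (bs xs) (bs ys)" by (rule bs_iso[OF l])
  ultimately show ?thesis unfolding LA_def using A_iso iso_sym by meson
qed

lemma L_split: "is_biproduct C X Y D i1 i2 p1 p2 \<Longrightarrow> set l \<subseteq> Obj C \<Longrightarrow> LA (D # l) \<longleftrightarrow> LA (X # Y # l)"
proof -
  assume b: "is_biproduct C X Y D i1 i2 p1 p2" and l: "set l \<subseteq> Obj C"
  have i: "isomorphic C (bs (D # l)) (bs (X # Y # l))" using bs_split[OF b l] .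
  have o: "X \<in> Obj C" "Y \<in> Obj C" "D \<in> Obj C" using bp_facts[OF b] by auto
  show ?thesis unfolding LA_def using o l A_iso[OF _ i] A_iso[OF _ iso_sym[OF i]] by auto
qed

lemma L_app: "LA xs \<Longrightarrow> LA ys \<Longrightarrow> LA (xs @ ys)"
proof -
  assume a: "LA xs" "LA ys"
  hence o: "set xs \<subseteq> Obj C" "set ys \<subseteq> Obj C" "bs xs \<in> A" "bs ys \<in> A" unfolding LA_def by auto
  have "isomorphic C (bs (xs @ ys)) (bpo (bs xs) (bs ys))" using bs_app o by blast
  moreover have "bpo (bs xs) (bs ys) \<in> A" using A_sum o by blast
  ultimately show ?thesis unfolding LA_def using o isoA by auto
qed

lemma L_cancel: "LA (xs @ ys) \<Longrightarrow> LA ys \<Longrightarrow> set xs \<subseteq> Obj C \<Longrightarrow> LA xs"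
proof -
  assume a: "LA (xs @ ys)" "LA ys" "set xs \<subseteq> Obj C"
  have "bpo (bs xs) (bs ys) \<in> A" using a bs_app A_iso unfolding LA_def by auto
  thus ?thesis using A_cancel a unfolding LA_def by auto
qed

lemma L_nil: "LA []" unfolding LA_def using Z0_A by simp

lemma L_single: "X \<in> Obj C \<Longrightarrow> LA [X] \<longleftrightarrow> X \<in> A"
  unfolding LA_def using bpo_zero A_iso iso_sym by auto

lemma L_allA: "set xs \<subseteq> A \<Longrightarrow> LA xs"
proof (induction xs)
  case Nil show ?case by (rule L_nil)
next
  case (Cons x xs)
  have "LA ([x] @ xs)" using Cons A_sub L_single by (intro L_app) auto
  thus ?case by simp
qed

end



context thm_ctx
begin

definition odds :: "('o, 'm) seq \<Rightarrow> 'o list" where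
  "odds S = map (fst S) (filter odd [1..<Suc n])"
definition evens :: "('o, 'm) seq \<Rightarrow> 'o list" where
  "evens S = map (fst S) (filter even [1..<Suc n])"

definition Good :: "'o list \<Rightarrow> 'o list \<Rightarrow> bool" where
  "Good xs ys \<longleftrightarrow> set xs \<subseteq> Obj C \<and> set ys \<subseteq> Obj C \<and> (\<exists>ws. set ws \<subseteq> Obj C \<and> LA (xs @ ws) \<and> LA (ys @ ws))"

lemma la2_map: "(\<And>l. l \<in> set L \<Longrightarrow> P (f l) (g l)) \<Longrightarrow> list_all2 P (map f L) (map g L)"
  by (induction L) auto

lemma la2_refl: "set xs \<subseteq> Obj C \<Longrightarrow> list_all2 (isomorphic C) xs xs"
  by (induction xs) (auto intro: iso_refl)

lemma REPL:
  assumes d: "distinct L" and kz: "kz \<in> set L" and ob: "\<And>l. l \<in> set L \<Longrightarrow> f l \<in> Obj C \<and> g l \<in> Obj C"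
    and isl: "\<And>l. l \<in> set L \<Longrightarrow> l \<noteq> kz \<Longrightarrow> isomorphic C (f l) (g l)"
    and b: "is_biproduct C (g kz) B (f kz) i1 i2 p1 p2" and ws: "set ws \<subseteq> Obj C"
  shows "LA (map f L @ ws) \<longleftrightarrow> LA (map g L @ B # ws)"
proof -
  obtain L1 L2 where L: "L = L1 @ kz # L2" using kz by (meson split_list)
  have n1: "kz \<notin> set L1" "kz \<notin> set L2" using d L by auto
  define h where "h l = (if l = kz then f kz else g l)" for l
  have "list_all2 (isomorphic C) (map f L) (map h L)"
    by (rule la2_map) (use isl ob in \<open>auto simp: h_def intro: iso_refl\<close>)
  hence "list_all2 (isomorphic C) (map f L @ ws) (map h L @ ws)"
    using la2_refl[OF ws] by (rule list_all2_appendI)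
  hence e1: "LA (map f L @ ws) \<longleftrightarrow> LA (map h L @ ws)" by (rule L_iso)
  have mh: "map h L1 = map g L1" "map h L2 = map g L2" using n1 by (auto simp: h_def)
  have e2: "LA (map h L @ ws) \<longleftrightarrow> LA (f kz # (map g L1 @ map g L2 @ ws))"
    by (rule L_perm) (simp add: L mh h_def)
  have so: "set (map g L1 @ map g L2 @ ws) \<subseteq> Obj C" using ob ws L by auto
  have e3: "LA (f kz # (map g L1 @ map g L2 @ ws)) \<longleftrightarrow> LA (g kz # B # (map g L1 @ map g L2 @ ws))"
    by (rule L_split[OF b so])
  have e4: "LA (g kz # B # (map g L1 @ map g L2 @ ws)) \<longleftrightarrow> LA (map g L @ B # ws)"
    by (rule L_perm) (simp add: L)
  show ?thesis using e1 e2 e3 e4 by simp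
qed

lemma ADD:
  assumes S: "S \<in> N" and B: "B \<in> Obj C" and j: "1 \<le> j" "j < n"
  shows "\<exists>S'\<in>N. (\<forall>i. 1 \<le> i \<longrightarrow> i \<le> n \<longrightarrow> i \<noteq> j \<longrightarrow> i \<noteq> Suc j \<longrightarrow> isomorphic C (fst S' i) (fst S i))
     \<and> (\<exists>i1 i2 p1 p2. is_biproduct C (fst S j) B (fst S' j) i1 i2 p1 p2)
     \<and> (\<exists>i1 i2 p1 p2. is_biproduct C (fst S (Suc j)) B (fst S' (Suc j)) i1 i2 p1 p2)"
proof -
  obtain S' where S': "S' \<in> N" and b: "\<forall>i\<in>{1..n}. \<exists>i1 i2 p1 p2. is_biproduct C (fst S i) (fst (T j B) i) (fst S' i) i1 i2 p1 p2"
    using DSUM[OF S TN[OF B j]] by blast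
  have "isomorphic C (fst S' i) (fst S i)" if th: "1 \<le> i" "i \<le> n" "i \<noteq> j" "i \<noteq> Suc j" for i
  proof -
    have "i \<in> {1..n}" using th by auto
    hence "\<exists>i1 i2 p1 p2. is_biproduct C (fst S i) (fst (T j B) i) (fst S' i) i1 i2 p1 p2" using b by blast
    hence "\<exists>i1 i2 p1 p2. is_biproduct C (fst S i) Z0 (fst S' i) i1 i2 p1 p2" using th by (simp add: tobj_def)
    then obtain i1 i2 p1 p2 where "is_biproduct C (fst S i) Z0 (fst S' i) i1 i2 p1 p2" by blast
    hence "isomorphic C (fst S' i) (bpo (fst S i) Z0)" by (rule bp_bpo)
    moreover have "fst S i \<in> Obj C" using is_seqD(1)[OF seqN[OF S]] th by blast
    ultimately show ?thesis using bpo_zero iso_trans by blast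
  qed
  moreover have "\<exists>i1 i2 p1 p2. is_biproduct C (fst S j) B (fst S' j) i1 i2 p1 p2"
  proof -
    have "j \<in> {1..n}" using j by auto
    hence "\<exists>i1 i2 p1 p2. is_biproduct C (fst S j) (fst (T j B) j) (fst S' j) i1 i2 p1 p2" using b by blast
    thus ?thesis by (simp add: tobj_def)
  qed
  moreover have "\<exists>i1 i2 p1 p2. is_biproduct C (fst S (Suc j)) B (fst S' (Suc j)) i1 i2 p1 p2"
  proof -
    have "Suc j \<in> {1..n}" using j by auto
    hence "\<exists>i1 i2 p1 p2. is_biproduct C (fst S (Suc j)) (fst (T j B) (Suc j)) (fst S' (Suc j)) i1 i2 p1 p2" using b by blast
    thus ?thesis by (simp add: tobj_def)
  qed
  ultimately show ?thesis using S' by blast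
qed

lemma seq_obj: "S \<in> N \<Longrightarrow> 1 \<le> i \<Longrightarrow> i \<le> n \<Longrightarrow> fst S i \<in> Obj C"
  using is_seqD(1)[OF seqN] by blast

lemma set_odds: "S \<in> N \<Longrightarrow> set (odds S) \<subseteq> Obj C"
  unfolding odds_def using seq_obj[of S] by auto
lemma set_evens: "S \<in> N \<Longrightarrow> set (evens S) \<subseteq> Obj C"
  unfolding evens_def using seq_obj[of S] by auto

lemma MAIN_aux: "\<forall>S\<in>N. (\<forall>i. 1 \<le> i \<longrightarrow> i \<le> n - 1 - k \<longrightarrow> fst S i \<in> A) \<longrightarrow> Good (odds S) (evens S)"
proof (induction k)
  case 0
  show ?case
  proof (intro ballI impI)
    fix S assume S: "S \<in> N" and h: "\<forall>i. 1 \<le> i \<longrightarrow> i \<le> n - 1 - 0 \<longrightarrow> fst S i \<in> A"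
    have "fst S n \<in> A" by (rule complD[OF S]) (use h n1 in auto)
    hence all: "fst S i \<in> A" if "1 \<le> i" "i \<le> n" for i using h that by (cases "i = n") auto
    have "LA (odds S @ [])" "LA (evens S @ [])"
      using all by (auto intro!: L_allA simp: odds_def evens_def)
    thus "Good (odds S) (evens S)" unfolding Good_def using set_odds[OF S] set_evens[OF S]
      by (intro conjI exI[of _ "[]"]) auto
  qed
next
  case (Suc k)
  show ?case
  proof (cases "n - 1 - Suc k = n - 1 - k")
    case True thus ?thesis using Suc.IH by simp
  next
    case False
    define j where "j = n - 1 - k"
    have j: "1 \<le> j" "j < n" "n - 1 - Suc k = j - 1" using False n1 unfolding j_def by auto
    show ?thesis
    proof (intro ballI impI)
      fix S assume S: "S \<in> N" and h: "\<forall>i. 1 \<le> i \<longrightarrow> i \<le> n - 1 - Suc k \<longrightarrow> fst S i \<in> A"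
      have Sj: "fst S j \<in> Obj C" using seq_obj[OF S] j by auto
      obtain D B a1 a2 b1 b2 where D: "D \<in> A" "is_biproduct C (fst S j) B D a1 a2 b1 b2"
        using denseD[OF Sj] by blast
      have B: "B \<in> Obj C" using bp_facts[OF D(2)] by blast
      obtain S' where S': "S' \<in> N" and o: "\<And>i. 1 \<le> i \<Longrightarrow> i \<le> n \<Longrightarrow> i \<noteq> j \<Longrightarrow> i \<noteq> Suc j \<Longrightarrow> isomorphic C (fst S' i) (fst S i)"
        and bj: "\<exists>i1 i2 p1 p2. is_biproduct C (fst S j) B (fst S' j) i1 i2 p1 p2"
        and bj1: "\<exists>i1 i2 p1 p2. is_biproduct C (fst S (Suc j)) B (fst S' (Suc j)) i1 i2 p1 p2"
        using ADD[OF S B j(1,2)] by blast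
      have "\<forall>i. 1 \<le> i \<longrightarrow> i \<le> n - 1 - k \<longrightarrow> fst S' i \<in> A"
      proof (intro allI impI)
        fix i assume i: "1 \<le> i" "i \<le> n - 1 - k"
        show "fst S' i \<in> A"
        proof (cases "i = j")
          case True
          obtain i1 i2 p1 p2 where "is_biproduct C (fst S j) B (fst S' j) i1 i2 p1 p2" using bj by blast
          hence "isomorphic C (fst S' j) (bpo (fst S j) B)" by (rule bp_bpo)
          moreover have "isomorphic C D (bpo (fst S j) B)" using bp_bpo[OF D(2)] .
          ultimately have "isomorphic C D (fst S' j)" using iso_trans iso_sym by blast
          thus ?thesis using True A_iso D(1) by blast
        next
          case False
          hence "i \<le> n - 1 - Suc k" using i j unfolding j_def by auto
          hence "fst S i \<in> A" using h i by blast
          thus ?thesis using o[of i] i False j isoA unfolding j_def by auto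
        qed
      qed
      hence G: "Good (odds S') (evens S')" using Suc.IH S' by blast
      then obtain ws where ws: "set ws \<subseteq> Obj C" "LA (odds S' @ ws)" "LA (evens S' @ ws)"
        unfolding Good_def by blast
      have key: "LA (map (fst S') (filter P [1..<Suc n]) @ ws) \<longleftrightarrow> LA (map (fst S) (filter P [1..<Suc n]) @ B # ws)"
        if P: "P j \<longleftrightarrow> \<not> P (Suc j)" for P
      proof -
        define l0 where "l0 = (if P j then j else Suc j)"
        have bl0: "\<exists>i1 i2 p1 p2. is_biproduct C (fst S l0) B (fst S' l0) i1 i2 p1 p2"
          using bj bj1 unfolding l0_def by auto
        then obtain i1 i2 p1 p2 where bl: "is_biproduct C (fst S l0) B (fst S' l0) i1 i2 p1 p2" by blast
        show ?thesis
        proof (rule REPL[where kz=l0 and f="fst S'" and g="fst S", OF _ _ _ _ bl ws(1)])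
          show "distinct (filter P [1..<Suc n])" by simp
          show "l0 \<in> set (filter P [1..<Suc n])" using j P unfolding l0_def by (cases "Suc j = n") auto
          fix l assume l: "l \<in> set (filter P [1..<Suc n])"
          thus "fst S' l \<in> Obj C \<and> fst S l \<in> Obj C" using seq_obj[OF S] seq_obj[OF S'] by auto
          assume "l \<noteq> l0"
          hence "l \<noteq> j" "l \<noteq> Suc j" using l P unfolding l0_def by auto
          thus "isomorphic C (fst S' l) (fst S l)" using o l by auto
        qed
      qed
      have "LA (odds S @ B # ws)" using key[of odd] ws(2) unfolding odds_def by simp
      moreover have "LA (evens S @ B # ws)" using key[of even] ws(3) unfolding evens_def by simp
      ultimately show "Good (odds S) (evens S)" unfolding Good_def using set_odds[OF S] set_evens[OF S] ws B
        by (intro conjI exI[of _ "B # ws"]) auto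
    qed
  qed
qed

lemma MAIN: "S \<in> N \<Longrightarrow> Good (odds S) (evens S)"
  using MAIN_aux[of "n - 1"] by auto

end



context thm_ctx
begin

definition sg :: "'o list \<Rightarrow> 'o set \<Rightarrow> int" where
  "sg xs K = sum_list (map (\<lambda>x. gen C x K) xs)"

lemma sg_simps[simp]: "sg [] K = 0" "sg (x # xs) K = gen C x K + sg xs K" "sg (xs @ ys) K = sg xs K + sg ys K"
  by (simp_all add: sg_def)

lemma gen_nonneg: "gen C x K \<ge> 0" by (simp add: gen_def)

lemma sg_nonneg: "sg xs K \<ge> 0"
  by (induction xs) (auto simp: gen_nonneg add_nonneg_nonneg)

lemma EC_aux: "(\<Sum>i = 1..m. (-1) ^ (i + 1) * gen C (fst S i) K) =
  sg (map (fst S) (filter odd [1..<Suc m])) K - sg (map (fst S) (filter even [1..<Suc m])) K"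
proof (induction m)
  case 0 thus ?case by simp
next
  case (Suc m)
  have u: "[1..<Suc (Suc m)] = [1..<Suc m] @ [Suc m]" by simp
  show ?case unfolding u using Suc by (simp add: sum.atLeast1_atMost_eq)
qed

lemma EC: "euler_char n C S = (\<lambda>K. sg (odds S) K - sg (evens S) K)"
  unfolding euler_char_def odds_def evens_def by (rule ext, rule EC_aux)

lemma iso_class_eq: "y \<in> Obj C \<Longrightarrow> iso_class C x = iso_class C y \<Longrightarrow> isomorphic C x y"
proof -
  assume y: "y \<in> Obj C" and e: "iso_class C x = iso_class C y"
  have "y \<in> iso_class C y" using y iso_refl by (simp add: iso_class_def)
  hence "y \<in> iso_class C x" using e by simp
  thus ?thesis by (simp add: iso_class_def)
qed

lemma FREE: "(\<And>K. sg xs K = sg ys K) \<Longrightarrow> set xs \<subseteq> Obj C \<Longrightarrow> set ys \<subseteq> Obj C \<Longrightarrow> set ws \<subseteq> Obj C \<Longrightarrow>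
  LA (xs @ ws) \<longleftrightarrow> LA (ys @ ws)"
proof (induction xs arbitrary: ys ws)
  case Nil
  show ?case
  proof (cases ys)
    case Nil thus ?thesis by simp
  next
    case (Cons y l)
    have "sg ys (iso_class C y) \<ge> 1" using sg_nonneg[of l "iso_class C y"] Cons by (simp add: gen_def)
    thus ?thesis using Nil.prems(1)[of "iso_class C y"] by simp
  qed
next
  case (Cons x xs)
  have "sg ys (iso_class C x) \<ge> 1" using Cons.prems(1)[of "iso_class C x"] sg_nonneg[of xs "iso_class C x"]
    by (simp add: gen_def)
  hence "\<exists>y\<in>set ys. gen C y (iso_class C x) \<noteq> 0"
  proof (induction ys)
    case Nil thus ?case by simp
  next
    case (Cons a l) thus ?case using sg_nonneg[of l] by (cases "gen C a (iso_class C x) = 0") auto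
  qed
  then obtain y where y: "y \<in> set ys" "gen C y (iso_class C x) \<noteq> 0" by blast
  have ic: "iso_class C x = iso_class C y" using y(2) by (simp add: gen_def split: if_splits)
  have gxy: "gen C x = gen C y" using ic by (simp add: gen_def fun_eq_iff)
  obtain l1 l2 where ys: "ys = l1 @ y # l2" using y(1) by (meson split_list)
  have yo: "y \<in> Obj C" "set l1 \<subseteq> Obj C" "set l2 \<subseteq> Obj C" using Cons.prems(3) ys by auto
  have xo: "x \<in> Obj C" "set xs \<subseteq> Obj C" using Cons.prems(2) by auto
  have xy: "isomorphic C x y" using iso_class_eq[OF yo(1) ic] .
  have e: "sg xs K = sg (l1 @ l2) K" for K using Cons.prems(1)[of K] gxy unfolding ys by simp
  have wo: "set (ws @ [x]) \<subseteq> Obj C" using Cons.prems(4) xo by auto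
  have IH: "LA (xs @ ws @ [x]) \<longleftrightarrow> LA ((l1 @ l2) @ ws @ [x])"
    by (rule Cons.IH[OF e xo(2) _ wo]) (use yo in auto)
  have p1: "LA ((x # xs) @ ws) \<longleftrightarrow> LA (xs @ ws @ [x])" by (rule L_perm) simp
  have "list_all2 (isomorphic C) ((l1 @ l2) @ ws @ [x]) ((l1 @ l2) @ ws @ [y])"
  proof (rule list_all2_appendI)
    show "list_all2 (isomorphic C) (l1 @ l2) (l1 @ l2)" using la2_refl yo by simp
    show "list_all2 (isomorphic C) (ws @ [x]) (ws @ [y])"
      by (rule list_all2_appendI) (use la2_refl Cons.prems(4) xy in auto)
  qed
  hence p2: "LA ((l1 @ l2) @ ws @ [x]) \<longleftrightarrow> LA ((l1 @ l2) @ ws @ [y])" by (rule L_iso)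
  have p3: "LA ((l1 @ l2) @ ws @ [y]) \<longleftrightarrow> LA (ys @ ws)" by (rule L_perm) (simp add: ys)
  show ?case using p1 IH p2 p3 by simp
qed

definition Inv :: "('o set \<Rightarrow> int) \<Rightarrow> bool" where
  "Inv f \<longleftrightarrow> (\<exists>xs ys. set xs \<subseteq> Obj C \<and> set ys \<subseteq> Obj C \<and> f = (\<lambda>K. sg xs K - sg ys K) \<and> Good xs ys)"

lemma Inv_zspan: "f \<in> zspan (K0_relations n C N \<union> {gen C Y | Y. Y \<in> A}) \<Longrightarrow> Inv f"
proof (induction rule: zspan.induct)
  case zspan_zero
  show ?case unfolding Inv_def Good_def
    by (intro exI[of _ "[]"] conjI) (auto intro: L_nil)
next
  case (zspan_gen g)
  then consider (e) S where "S \<in> N" "g = euler_char n C S" | (a) Y where "Y \<in> A" "g = gen C Y"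
    using oddn unfolding K0_relations_def by auto
  then show ?case
  proof cases
    case e
    show ?thesis unfolding Inv_def
      using MAIN[OF e(1)] set_odds[OF e(1)] set_evens[OF e(1)] EC e(2) by blast
  next
    case a
    have YO: "Y \<in> Obj C" using a A_sub by auto
    have "Good [Y] []" unfolding Good_def using YO L_single[OF YO] a L_nil
      by (intro conjI exI[of _ "[]"]) auto
    moreover have "g = (\<lambda>K. sg [Y] K - sg [] K)" using a by simp
    ultimately show ?thesis unfolding Inv_def using YO by (intro exI[of _ "[Y]"] exI[of _ "[]"]) auto
  qed
next
  case (zspan_diff x y)
  obtain xs ys where X: "set xs \<subseteq> Obj C" "set ys \<subseteq> Obj C" "x = (\<lambda>K. sg xs K - sg ys K)" "Good xs ys"
    using zspan_diff.IH(1) unfolding Inv_def by blast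
  obtain xs' ys' where Y: "set xs' \<subseteq> Obj C" "set ys' \<subseteq> Obj C" "y = (\<lambda>K. sg xs' K - sg ys' K)" "Good xs' ys'"
    using zspan_diff.IH(2) unfolding Inv_def by blast
  obtain ws1 where w1: "set ws1 \<subseteq> Obj C" "LA (xs @ ws1)" "LA (ys @ ws1)" using X(4) unfolding Good_def by blast
  obtain ws2 where w2: "set ws2 \<subseteq> Obj C" "LA (xs' @ ws2)" "LA (ys' @ ws2)" using Y(4) unfolding Good_def by blast
  have "LA ((xs @ ws1) @ (ys' @ ws2))" using L_app w1 w2 by blast
  hence a: "LA ((xs @ ys') @ ws1 @ ws2)" using L_perm[of "(xs @ ws1) @ (ys' @ ws2)" "(xs @ ys') @ ws1 @ ws2"] by simp
  have "LA ((ys @ ws1) @ (xs' @ ws2))" using L_app w1 w2 by blast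
  hence b: "LA ((ys @ xs') @ ws1 @ ws2)" using L_perm[of "(ys @ ws1) @ (xs' @ ws2)" "(ys @ xs') @ ws1 @ ws2"] by simp
  have "Good (xs @ ys') (ys @ xs')" unfolding Good_def using X Y w1 w2 a b
    by (intro conjI exI[of _ "ws1 @ ws2"]) auto
  moreover have "(\<lambda>K. x K - y K) = (\<lambda>K. sg (xs @ ys') K - sg (ys @ xs') K)" using X(3) Y(3) by (simp add: fun_eq_iff)
  ultimately show ?case unfolding Inv_def using X Y by (intro exI[of _ "xs @ ys'"] exI[of _ "ys @ xs'"]) auto
qed

lemma final: "X \<in> Obj C \<Longrightarrow> X \<in> A \<longleftrightarrow> class_zero_mod_image n C N A X"
proof
  assume "X \<in> A"
  thus "class_zero_mod_image n C N A X" unfolding class_zero_mod_image_def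
    by (intro zspan_gen) blast
next
  assume XO: "X \<in> Obj C" and cz: "class_zero_mod_image n C N A X"
  have "Inv (gen C X)" using cz unfolding class_zero_mod_image_def by (rule Inv_zspan)
  then obtain xs ys where xs: "set xs \<subseteq> Obj C" "set ys \<subseteq> Obj C" "gen C X = (\<lambda>K. sg xs K - sg ys K)" "Good xs ys"
    unfolding Inv_def by blast
  obtain ws where ws: "set ws \<subseteq> Obj C" "LA (xs @ ws)" "LA (ys @ ws)" using xs(4) unfolding Good_def by blast
  have "sg xs K = sg (X # ys) K" for K using fun_cong[OF xs(3), of K] by simp
  hence "LA (xs @ ws) \<longleftrightarrow> LA ((X # ys) @ ws)" by (rule FREE) (use xs XO ws in auto)
  hence "LA ([X] @ (ys @ ws))" using ws by simp
  hence "LA [X]" by (rule L_cancel) (use ws XO in auto)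
  thus "X \<in> A" using L_single XO by blast
qed

end



theorem lemma4p4:
  fixes n :: nat and C :: "('o, 'm) addcat" and SO :: "'o \<Rightarrow> 'o" and SM :: "'m \<Rightarrow> 'm"
    and N :: "('o, 'm) seq set" and A :: "'o set" and NA :: "('o, 'm) seq set" and X :: 'o
  assumes "n \<ge> 3" and "odd n"
    and "n_angulated n C SO SM N"
    and "n_angulated_subcat n C SO SM N A NA"
    and "complete_subcat n N A"
    and "dense_subcat C A"
    and "X \<in> Obj C"
  shows "X \<in> A \<longleftrightarrow> class_zero_mod_image n C N A X"
proof -
  have add: "is_additive C" using assms(3) unfolding n_angulated_def by blast
  interpret thm_ctx C n SO SM N A NA
    by unfold_locales (use assms add in auto)
  show ?thesis by (rule final[OF assms(7)])
qed

end
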